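(* Assume (I), that $f(\cdot,i,\mathbf q)$ is $C^1$ on $[0,\infty)$ for all $i\in S$, $\mathbf q\in D_i$, that $f_t:=\partial_t f$ also satisfies (I), and that condition (R) holds. Then for any $i\in S$ and $Q,Q^*\in\mathcal Q$, as $\varepsilon\downarrow0$, $$F(i,Q^* )-F(i,Q\otimes_\varepsilon Q^* )=\big(\Gamma^{Q^*}_i(Q^*_i)-\Gamma^{Q^*}_i(Q_i)\big)\varepsilon+\tfrac12\big(\Lambda^{Q^*}(i,Q^* )-\Lambda^{Q^*}(i,Q)\big)\varepsilon^2+o(\varepsilon^2).$$
   Context: Let $S=\{1,\dots,N\}$, $N\in\mathbb N$. For $i\in S$ let $E_i=\{q\in\mathbb R^N: q_j\ge0\text{ for }j\ne i,\ q_i=-\sum_{j\ne i}q_j\}$ and $D_i\subseteq E_i$ given; $\mathcal Q=\{Q\in\mathbb R^{N\times N}: Q_i\in D_i\ \forall i\}$, $Q_i$ the $i$-th row. For $Q\in\mathcal Q$, $X$ is a time-homogeneous continuous-time Markov chain on $S$ with generator $Q$, $\mathbb E_{i,Q}$ the expectation given $X_0=i$. A payoff function $f$ assigns $f(t,i,\mathbf q)\in\mathbb R$ to $t\ge0,i\in S,\mathbf q\in D_i$. Condition (I) for a function $g$ of $(t,i,\mathbf q)$: $\int_0^\infty\sup_{i\in S,\mathbf q\in D_i,\|\mathbf q\|\le c}|g(t,i,\mathbf q)|dt<\infty$ for all $c>0$. Condition (R): there is a function $r(t,\varepsilon;i,\mathbf q)$, continuous in $\varepsilon$, with $|f(t+\varepsilon,i,\mathbf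 q)-f(t,i,\mathbf q)-\varepsilon f_t(t,i,\mathbf q)|\le r(t,\varepsilon;i,\mathbf q)$ for all $t\ge0,\varepsilon>0,i,\mathbf q$, such that $\int_0^\infty r(t,\varepsilon;i,\mathbf q)dt<\infty$ for all sufficiently small $\varepsilon>0$ and $\varepsilon\mapsto r(t,\varepsilon;i,\mathbf q)/\varepsilon$ is nondecreasing for every $(t,i,\mathbf q)$. Define $F(i,Q)=\mathbb E_{i,Q}[\int_0^\infty f(t,X_t,Q_{X_t})dt]$, $G(i,Q)=\mathbb E_{i,Q}[\int_0^\infty f_t(t,X_t,Q_{X_t})dt]$, $F(Q)=(F(1,Q),\dots,F(N,Q))$, $G(Q)=(G(1,Q),\dots,G(N,Q))$. $Q\otimes_\varepsilon Q'$: $X$ evolves with generator $Q$ on $[0,\varepsilon]$ and $Q'$ on $(\varepsilon,\infty)$; $F(i,Q\otimes_\varepsilon Q')$ is the corresponding expected payoff $\mathbb E_i[\int_0^\varepsilon f(t,X_t,Q_{X_t})dt+\int_\varepsilon^\infty f(t,X_t,Q'_{X_t})dt]$. For $Q^*\in\mathcal Q$: $\Gamma^{Q^*}_i(\mathbf q)=f(0,i,\mathbf q)+\mathbf q\cdot F(Q^* )$ for $\mathbf q\in D_i$; $\Gamma^{Q^*}(Q)=(\Gamma^{Q^*}_1(Q_1),\dots,\Gamma^{Q^*}_N(Q_N))$; $\Lambda^{Q^*}(i,Q)=f_t(0,i,Q_i)+Q_i\cdot\big(2G(Q^* )+\Gamma^{Q^*}(Q)\big)$. *)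

theory Defs
  imports "HOL-Analysis.Analysis" "HOL-Library.Landau_Symbols"
begin

text \<open>State space S = the finite type 'n (N = CARD('n)). A generator matrix
  Q :: real^'n^'n has rows Q $ i.\<close>

primrec mat_pow :: "real^'n^'n \<Rightarrow> nat \<Rightarrow> real^'n^'n" where
  "mat_pow A 0 = mat 1"
| "mat_pow A (Suc k) = A ** mat_pow A k"

text \<open>Matrix exponential exp(tQ): transition matrix of the CTMC with generator Q.\<close>
definition trans_mat :: "real^'n^'n \<Rightarrow> real \<Rightarrow> real^'n^'n" where
  "trans_mat Q t = (\<Sum>k. ((t ^ k) / fact k) *\<^sub>R mat_pow Q k)"

definition E_set :: "'n::finite \<Rightarrow> (real^'n) set" where
  "E_set i = {q. (\<forall>j. j \<noteq> i \<longrightarrow> q $ j \<ge> 0) \<and> q $ i = - (\<Sum>j\<in>UNIV - {i}. q $ j)}"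

definition admissible :: "('n \<Rightarrow> (real^'n) set) \<Rightarrow> real^'n^'n \<Rightarrow> bool" where
  "admissible D Q \<longleftrightarrow> (\<forall>i. Q $ i \<in> D i)"

definition cond_I :: "('n \<Rightarrow> (real^'n) set) \<Rightarrow> (real \<Rightarrow> 'n \<Rightarrow> real^'n \<Rightarrow> real) \<Rightarrow> bool" where
  "cond_I D g \<longleftrightarrow> (\<forall>c>0.
     (\<integral>\<^sup>+ t. indicator {0..} t *
        (SUP p \<in> {(i, q). q \<in> D i \<and> norm q \<le> c}. ennreal \<bar>g t (fst p) (snd p)\<bar>) \<partial>lborel) < \<infinity>)"

definition cond_R :: "('n \<Rightarrow> (real^'n) set) \<Rightarrow> (real \<Rightarrow> 'n \<Rightarrow> real^'n \<Rightarrow> real)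
     \<Rightarrow> (real \<Rightarrow> 'n \<Rightarrow> real^'n \<Rightarrow> real) \<Rightarrow> bool" where
  "cond_R D f ft \<longleftrightarrow> (\<exists>r :: real \<Rightarrow> real \<Rightarrow> 'n \<Rightarrow> real^'n \<Rightarrow> real.
     (\<forall>t i q. continuous_on {0<..} (\<lambda>e. r t e i q)) \<and>
     (\<forall>t\<ge>0. \<forall>e>0. \<forall>i. \<forall>q\<in>D i.
        \<bar>f (t + e) i q - f t i q - e * ft t i q\<bar> \<le> r t e i q) \<and>
     (\<forall>i. \<forall>q\<in>D i. \<exists>e0>0. \<forall>e. 0 < e \<and> e < e0 \<longrightarrow>
        (\<integral>\<^sup>+ t. indicator {0..} t * ennreal (r t e i q) \<partial>lborel) < \<infinity>) \<and>
     (\<forall>t i q. mono_on {0<..} (\<lambda>e. r t e i q / e)))"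

text \<open>Expected payoff F(i,Q) = E_{i,Q}[\<integral>_0^\<infinity> f(t,X_t,Q_{X_t}) dt], written through
  the transition probabilities P_t(i,j) = exp(tQ)_{ij} (Fubini).\<close>
definition payoff :: "(real \<Rightarrow> 'n \<Rightarrow> real^'n \<Rightarrow> real) \<Rightarrow> 'n::finite \<Rightarrow> real^'n^'n \<Rightarrow> real" where
  "payoff f i Q = integral {0..} (\<lambda>t. \<Sum>j\<in>UNIV. trans_mat Q t $ i $ j * f t j (Q $ j))"

definition payoff_vec :: "(real \<Rightarrow> 'n \<Rightarrow> real^'n \<Rightarrow> real) \<Rightarrow> real^'n^'n \<Rightarrow> real^'n" where
  "payoff_vec f Q = (\<chi> i. payoff f i Q)"

text \<open>F(i, Q \<otimes>_\<epsilon> Q'): generator Q on [0,\<epsilon>], Q' afterwards.\<close>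
definition payoff_switch :: "(real \<Rightarrow> 'n \<Rightarrow> real^'n \<Rightarrow> real) \<Rightarrow> 'n::finite
     \<Rightarrow> real^'n^'n \<Rightarrow> real \<Rightarrow> real^'n^'n \<Rightarrow> real" where
  "payoff_switch f i Q e Q' =
     integral {0..e} (\<lambda>t. \<Sum>j\<in>UNIV. trans_mat Q t $ i $ j * f t j (Q $ j))
   + integral {e..} (\<lambda>t. \<Sum>j\<in>UNIV. (trans_mat Q e ** trans_mat Q' (t - e)) $ i $ j * f t j (Q' $ j))"

definition Gamma_i :: "(real \<Rightarrow> 'n \<Rightarrow> real^'n \<Rightarrow> real) \<Rightarrow> real^'n^'n \<Rightarrow> 'n \<Rightarrow> real^'n \<Rightarrow> real" where
  "Gamma_i f Qs i q = f 0 i q + q \<bullet> payoff_vec f Qs"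

definition Gamma_vec :: "(real \<Rightarrow> 'n \<Rightarrow> real^'n \<Rightarrow> real) \<Rightarrow> real^'n^'n \<Rightarrow> real^'n^'n \<Rightarrow> real^'n" where
  "Gamma_vec f Qs Q = (\<chi> i. Gamma_i f Qs i (Q $ i))"

definition Lambda :: "(real \<Rightarrow> 'n \<Rightarrow> real^'n \<Rightarrow> real) \<Rightarrow> (real \<Rightarrow> 'n \<Rightarrow> real^'n \<Rightarrow> real)
     \<Rightarrow> real^'n^'n \<Rightarrow> 'n \<Rightarrow> real^'n^'n \<Rightarrow> real" where
  "Lambda f ft Qs i Q = ft 0 i (Q $ i) + (Q $ i) \<bullet> (2 *\<^sub>R payoff_vec ft Qs + Gamma_vec f Qs Q)"

end

theory Submission
  imports Defs
begin

lemma matrix_add_rdistrib': "((B + C) ** A) = (B ** A) + (C ** A)" for A B C :: "real^'n^'n"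
  by (vector matrix_matrix_mult_def sum.distrib[symmetric] field_simps)

lemma mat_entry: "mat 1 $ i $ j = (if i = j then (1::real) else 0)"
  by (simp add: mat_def)

lemma mmult_entry: "(A ** B) $ i $ j = (\<Sum>l\<in>UNIV. A $ i $ l * B $ l $ j)" for A B :: "real^'n^'n"
  by (simp add: matrix_matrix_mult_def)

lemma sum_mmult_left: "(\<Sum>x\<in>S. f x) ** B = (\<Sum>x\<in>S. f x ** B)" for B :: "real^'n^'n" and f :: "_ \<Rightarrow> real^'n^'n"
  by (induction S rule: infinite_finite_induct) (auto simp: matrix_add_rdistrib')

lemma sum_mmult_right: "B ** (\<Sum>x\<in>S. f x) = (\<Sum>x\<in>S. B ** f x)" for B :: "real^'n^'n" and f :: "_ \<Rightarrow> real^'n^'n"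
  by (induction S rule: infinite_finite_induct) (auto simp: matrix_add_ldistrib)

lemma mat_pow_comm: "A ** mat_pow A k = mat_pow A k ** A"
  by (induction k) (simp_all add: matrix_mul_assoc)

lemma mat_pow_comm_gen: "A ** B = B ** A \<Longrightarrow> mat_pow A k ** B = B ** mat_pow A k"
  by (induction k) (simp_all, metis matrix_mul_assoc)

lemma mat_pow_add: "mat_pow A (m + k) = mat_pow A m ** mat_pow A k"
  by (induction m) (simp_all add: matrix_mul_assoc)

lemma mat_pow_scale: "mat_pow (c *\<^sub>R A) k = (c ^ k) *\<^sub>R mat_pow A k"
  by (induction k) (simp_all add: scalar_matrix_assoc[symmetric] matrix_scalar_ac)

lemma mat_pow_id: "mat_pow (c *\<^sub>R mat 1) k = (c ^ k) *\<^sub>R (mat 1 :: real^'n^'n)"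
  by (induction k) (simp_all add: scalar_matrix_assoc[symmetric] matrix_scalar_ac)

definition mnorm :: "real^'n^'n \<Rightarrow> real" where
  "mnorm A = (\<Sum>i\<in>UNIV. \<Sum>j\<in>UNIV. \<bar>A $ i $ j\<bar>)"

lemma mnorm_nonneg: "0 \<le> mnorm A"
  by (simp add: mnorm_def sum_nonneg)

lemma row_le_mnorm: "(\<Sum>j\<in>UNIV. \<bar>A $ i $ j\<bar>) \<le> mnorm A"
  unfolding mnorm_def by (rule member_le_sum) (auto intro: sum_nonneg)

lemma mat_pow_entry_bound: "\<bar>mat_pow A k $ i $ j\<bar> \<le> mnorm A ^ k"
proof (induction k arbitrary: i j)
  case 0
  then show ?case by (simp add: mat_def)
next
  case (Suc k)
  have "\<bar>mat_pow A (Suc k) $ i $ j\<bar> = \<bar>\<Sum>l\<in>UNIV. A $ i $ l * mat_pow A k $ l $ j\<bar>"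
    by (simp add: mmult_entry)
  also have "\<dots> \<le> (\<Sum>l\<in>UNIV. \<bar>A $ i $ l\<bar> * mnorm A ^ k)"
    by (rule order_trans[OF sum_abs]) (auto intro!: sum_mono simp: abs_mult intro: mult_left_mono Suc)
  also have "\<dots> = (\<Sum>l\<in>UNIV. \<bar>A $ i $ l\<bar>) * mnorm A ^ k"
    by (simp add: sum_distrib_right)
  also have "\<dots> \<le> mnorm A * mnorm A ^ k"
    by (rule mult_right_mono[OF row_le_mnorm]) (simp add: mnorm_nonneg)
  finally show ?case by simp
qed

lemma norm_mat_le: "norm (x :: real^'n^'n) \<le> (\<Sum>i\<in>UNIV. \<Sum>j\<in>UNIV. \<bar>x $ i $ j\<bar>)"
proof -
  have "norm x \<le> (\<Sum>i\<in>UNIV. norm (x $ i))"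
    by (simp add: norm_vec_def L2_set_le_sum)
  also have "\<dots> \<le> (\<Sum>i\<in>UNIV. \<Sum>j\<in>UNIV. \<bar>x $ i $ j\<bar>)"
    by (rule sum_mono) (rule norm_le_l1_cart)
  finally show ?thesis .
qed

lemma norm_ser_bound:
  "norm ((t ^ k / fact k) *\<^sub>R mat_pow A k) \<le> real (CARD('n) * CARD('n)) * ((\<bar>t\<bar> * mnorm A) ^ k / fact k)"
  for A :: "real^'n^'n"
proof -
  have b: "norm (mat_pow A k) \<le> real (CARD('n) * CARD('n)) * mnorm A ^ k"
  proof -
    have "(\<Sum>i\<in>UNIV. \<Sum>j\<in>UNIV. \<bar>mat_pow A k $ i $ j\<bar>) \<le> (\<Sum>i\<in>(UNIV::'n set). \<Sum>j\<in>(UNIV::'n set). mnorm A ^ k)"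
      by (intro sum_mono mat_pow_entry_bound)
    then have "norm (mat_pow A k) \<le> (\<Sum>i\<in>(UNIV::'n set). \<Sum>j\<in>(UNIV::'n set). mnorm A ^ k)"
      using norm_mat_le[of "mat_pow A k"] by linarith
    then show ?thesis by simp
  qed
  have "norm ((t ^ k / fact k) *\<^sub>R mat_pow A k) = (\<bar>t\<bar> ^ k / fact k) * norm (mat_pow A k)"
    by (simp add: power_abs)
  also have "\<dots> \<le> (\<bar>t\<bar> ^ k / fact k) * (real (CARD('n) * CARD('n)) * mnorm A ^ k)"
    by (rule mult_left_mono[OF b]) simp
  also have "\<dots> = real (CARD('n) * CARD('n)) * ((\<bar>t\<bar> * mnorm A) ^ k / fact k)"
    by (simp add: power_mult_distrib)
  finally show ?thesis .
qed

lemma summable_norm_ser: "summable (\<lambda>k. norm ((t ^ k / fact k) *\<^sub>R mat_pow A k))"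
  for A :: "real^'n^'n"
proof (rule summable_comparison_test')
  show "summable (\<lambda>k. real (CARD('n) * CARD('n)) * ((\<bar>t\<bar> * mnorm A) ^ k / fact k))"
    using summable_exp_generic[of "\<bar>t\<bar> * mnorm A"] by (intro summable_mult) (simp add: divide_inverse_commute)
  show "norm (norm ((t ^ n / fact n) *\<^sub>R mat_pow A n)) \<le> real (CARD('n) * CARD('n)) * ((\<bar>t\<bar> * mnorm A) ^ n / fact n)" for n
    using norm_ser_bound[of t n A] by simp
qed

lemma summable_ser: "summable (\<lambda>k. (t ^ k / fact k) *\<^sub>R mat_pow A k)"
  for A :: "real^'n^'n"
  by (rule summable_norm_cancel[OF summable_norm_ser])

lemma trans_sums: "(\<lambda>k. (t ^ k / fact k) *\<^sub>R mat_pow A k) sums trans_mat A t"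
  unfolding trans_mat_def using summable_ser by (rule summable_sums)

lemma bl_entry: "bounded_linear (\<lambda>x::real^'n^'n. x $ i $ j)"
  by (rule bounded_linear_compose[OF bounded_linear_vec_nth bounded_linear_vec_nth])

lemma trans_entry_sums: "(\<lambda>k. t ^ k / fact k * mat_pow A k $ i $ j) sums (trans_mat A t $ i $ j)"
proof -
  have "(\<lambda>k. ((t ^ k / fact k) *\<^sub>R mat_pow A k) $ i $ j) sums (trans_mat A t $ i $ j)"
    by (rule bounded_linear.sums[OF bl_entry trans_sums])
  then show ?thesis by simp
qed

lemma trans_entry: "trans_mat A t $ i $ j = (\<Sum>k. t ^ k / fact k * mat_pow A k $ i $ j)"
  by (rule sums_unique[OF trans_entry_sums])

lemma entry_le_norm: "\<bar>x $ i $ l\<bar> \<le> norm (x :: real^'n^'n)"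
  using Finite_Cartesian_Product.norm_nth_le[of "x $ i" l] Finite_Cartesian_Product.norm_nth_le[of x i]
  by simp

lemma mat_cauchy:
  fixes a b c :: "nat \<Rightarrow> real^'n^'n"
  assumes a: "summable (\<lambda>k. norm (a k))" and b: "summable (\<lambda>k. norm (b k))"
    and c: "summable c" and cdef: "\<And>n. c n = (\<Sum>m\<le>n. a m ** b (n - m))"
  shows "suminf a ** suminf b = suminf c"
proof -
  have sa: "summable a" and sb: "summable b" using a b summable_norm_cancel by blast+
  have ent: "suminf x $ i $ j = (\<Sum>k. x k $ i $ j)" if "summable x" for x :: "nat \<Rightarrow> real^'n^'n" and i j
    using bounded_linear.suminf[OF bl_entry that] by simp
  have "(suminf a ** suminf b) $ i $ j = suminf c $ i $ j" for i j
  proof -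
    have xa: "summable (\<lambda>k. norm (a k $ i $ l))" for l
      by (rule summable_comparison_test'[OF a]) (simp add: entry_le_norm)
    have yb: "summable (\<lambda>k. norm (b k $ l $ j))" for l
      by (rule summable_comparison_test'[OF b]) (simp add: entry_le_norm)
    have cp: "(\<lambda>n. \<Sum>m\<le>n. a m $ i $ l * b (n - m) $ l $ j) sums ((\<Sum>k. a k $ i $ l) * (\<Sum>k. b k $ l $ j))" for l
      by (rule Cauchy_product_sums[OF xa yb])
    have "(suminf a ** suminf b) $ i $ j = (\<Sum>l\<in>UNIV. (\<Sum>k. a k $ i $ l) * (\<Sum>k. b k $ l $ j))"
      by (simp add: mmult_entry ent[OF sa] ent[OF sb])
    also have "\<dots> = (\<Sum>l\<in>UNIV. \<Sum>n. \<Sum>m\<le>n. a m $ i $ l * b (n - m) $ l $ j)"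
      using cp sums_unique by (metis (no_types, lifting))
    also have "\<dots> = (\<Sum>n. \<Sum>l\<in>UNIV. \<Sum>m\<le>n. a m $ i $ l * b (n - m) $ l $ j)"
      by (rule suminf_sum[symmetric]) (use cp sums_summable in blast)
    also have "\<dots> = (\<Sum>n. c n $ i $ j)"
      by (simp add: cdef mmult_entry sum.swap[of _ UNIV])
    also have "\<dots> = suminf c $ i $ j" by (simp add: ent[OF c])
    finally show ?thesis .
  qed
  then show ?thesis by (simp add: vec_eq_iff)
qed

lemma smult_l: "(k *\<^sub>R A) ** B = k *\<^sub>R (A ** B)" for A B :: "real^'n^'n"
  by (simp add: scalar_matrix_assoc)

lemma smult_r: "A ** (k *\<^sub>R B) = k *\<^sub>R (A ** B)" for A B :: "real^'n^'n"
  by (simp add: matrix_scalar_ac scalar_matrix_assoc)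

lemma S_add_commuting:
  fixes x y :: "real^'n^'n"
  defines S_def: "S \<equiv> \<lambda>x n. (1 / fact n) *\<^sub>R mat_pow x n"
  assumes comm: "x ** y = y ** x"
  shows "S (x + y) n = (\<Sum>i\<le>n. S x i ** S y (n - i))"
proof (induct n)
  case 0
  show ?case
    unfolding S_def by simp
next
  case (Suc n)
  have S_Suc: "\<And>x n. S x (Suc n) = (1 / real (Suc n)) *\<^sub>R (x ** S x n)"
    unfolding S_def by (simp add: smult_r)
  then have times_S: "\<And>x n. x ** S x n = real (Suc n) *\<^sub>R S x (Suc n)"
    by simp
  have S_comm: "\<And>n. S x n ** y = y ** S x n"
    by (simp add: S_def smult_l smult_r mat_pow_comm_gen[OF comm])
  have "real (Suc n) *\<^sub>R S (x + y) (Suc n) = (x + y) ** (\<Sum>i\<le>n. S x i ** S y (n - i))"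
    by (metis Suc.hyps times_S)
  also have "\<dots> = x ** (\<Sum>i\<le>n. S x i ** S y (n - i)) + y ** (\<Sum>i\<le>n. S x i ** S y (n - i))"
    by (rule matrix_add_rdistrib')
  also have "\<dots> = (\<Sum>i\<le>n. x ** S x i ** S y (n - i)) + (\<Sum>i\<le>n. S x i ** y ** S y (n - i))"
    by (simp add: sum_mmult_right matrix_mul_assoc S_comm)
  also have "\<dots> = (\<Sum>i\<le>n. x ** S x i ** S y (n - i)) + (\<Sum>i\<le>n. S x i ** (y ** S y (n - i)))"
    by (simp add: matrix_mul_assoc)
  also have "\<dots> = (\<Sum>i\<le>n. real (Suc i) *\<^sub>R (S x (Suc i) ** S y (n - i)))
                + (\<Sum>i\<le>n. real (Suc n - i) *\<^sub>R (S x i ** S y (Suc n - i)))"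
    by (simp add: times_S Suc_diff_le smult_l smult_r)
  also have "(\<Sum>i\<le>n. real (Suc i) *\<^sub>R (S x (Suc i) ** S y (n - i)))
           = (\<Sum>i\<le>Suc n. real i *\<^sub>R (S x i ** S y (Suc n - i)))"
    by (subst sum.atMost_Suc_shift) simp
  also have "(\<Sum>i\<le>n. real (Suc n - i) *\<^sub>R (S x i ** S y (Suc n - i)))
           = (\<Sum>i\<le>Suc n. real (Suc n - i) *\<^sub>R (S x i ** S y (Suc n - i)))"
    by simp
  also have "(\<Sum>i\<le>Suc n. real i *\<^sub>R (S x i ** S y (Suc n - i)))
           + (\<Sum>i\<le>Suc n. real (Suc n - i) *\<^sub>R (S x i ** S y (Suc n - i)))
           = (\<Sum>i\<le>Suc n. real (Suc n) *\<^sub>R (S x i ** S y (Suc n - i)))"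
    by (simp flip: sum.distrib scaleR_add_left of_nat_add)
  also have "\<dots> = real (Suc n) *\<^sub>R (\<Sum>i\<le>Suc n. S x i ** S y (Suc n - i))"
    by (simp only: scaleR_right.sum)
  finally show "S (x + y) (Suc n) = (\<Sum>i\<le>Suc n. S x i ** S y (Suc n - i))"
    by (simp del: sum.cl_ivl_Suc)
qed

lemma trans1_add:
  fixes A B :: "real^'n^'n"
  assumes comm: "A ** B = B ** A"
  shows "trans_mat (A + B) 1 = trans_mat A 1 ** trans_mat B 1"
proof -
  have e: "trans_mat X 1 = (\<Sum>k. (1 / fact k) *\<^sub>R mat_pow X k)" for X :: "real^'n^'n"
    by (simp add: trans_mat_def)
  have n: "summable (\<lambda>k. norm ((1 / fact k) *\<^sub>R mat_pow X k))" for X :: "real^'n^'n"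
    using summable_norm_ser[of 1 X] by simp
  have s: "summable (\<lambda>k. (1 / fact k) *\<^sub>R mat_pow X k)" for X :: "real^'n^'n"
    using summable_ser[of 1 X] by simp
  show ?thesis unfolding e
    by (rule mat_cauchy[OF n n s, symmetric]) (rule S_add_commuting[OF comm])
qed

lemma trans_scale: "trans_mat A t = trans_mat (t *\<^sub>R A) 1"
  by (simp add: trans_mat_def mat_pow_scale)

lemma trans_add_time: "trans_mat A (s + t) = trans_mat A s ** trans_mat A t"
  for A :: "real^'n^'n"
proof -
  have c: "(s *\<^sub>R A) ** (t *\<^sub>R A) = (t *\<^sub>R A) ** (s *\<^sub>R A)"
    by (simp add: smult_l smult_r)
  show ?thesis
    by (simp add: trans_scale[of A] scaleR_add_left trans1_add[OF c])
qed

lemma trans_zero: "trans_mat A 0 = mat 1"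
proof -
  have "(\<lambda>k. ((0::real) ^ k / fact k) *\<^sub>R mat_pow A k) = (\<lambda>k. if k = 0 then mat_pow A k else 0)"
    by (auto simp: fun_eq_iff)
  then have "(\<lambda>k. ((0::real) ^ k / fact k) *\<^sub>R mat_pow A k) sums mat_pow A 0"
    using sums_single[of 0 "mat_pow A"] by simp
  then show ?thesis unfolding trans_mat_def by (simp add: sums_iff)
qed

lemma trans_id: "trans_mat (c *\<^sub>R mat 1) 1 = exp c *\<^sub>R (mat 1 :: real^'n^'n)"
proof -
  have "trans_mat (c *\<^sub>R mat 1) 1 = (\<Sum>k. (c ^ k / fact k) *\<^sub>R (mat 1 :: real^'n^'n))"
    by (simp add: trans_mat_def mat_pow_id)
  also have "\<dots> = (\<Sum>k. c ^ k / fact k) *\<^sub>R (mat 1 :: real^'n^'n)"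
    by (rule suminf_scaleR_left[symmetric]) (use summable_exp_generic[of c] in \<open>simp add: divide_inverse_commute\<close>)
  also have "(\<Sum>k. c ^ k / fact k) = exp c"
    by (simp add: exp_def divide_inverse_commute)
  finally show ?thesis .
qed

definition gen :: "real^'n^'n \<Rightarrow> bool" where
  "gen A \<longleftrightarrow> (\<forall>i j. i \<noteq> j \<longrightarrow> 0 \<le> A $ i $ j) \<and> (\<forall>i. (\<Sum>j\<in>UNIV. A $ i $ j) = 0)"

lemma E_set_sum: "q \<in> E_set i \<Longrightarrow> (\<Sum>j\<in>UNIV. q $ j) = 0"
  unfolding E_set_def by (simp add: sum.remove[of UNIV i])

lemma E_set_nonneg: "q \<in> E_set i \<Longrightarrow> j \<noteq> i \<Longrightarrow> 0 \<le> q $ j"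
  unfolding E_set_def by simp

lemma mat_pow_nonneg: "(\<And>i j. 0 \<le> A $ i $ j) \<Longrightarrow> 0 \<le> mat_pow A k $ i $ j"
  by (induction k arbitrary: i j) (auto simp: mat_def mmult_entry intro!: sum_nonneg)

lemma trans_nonneg_of_nonneg:
  assumes "\<And>i j. 0 \<le> A $ i $ j" "0 \<le> t"
  shows "0 \<le> trans_mat A t $ i $ j"
  unfolding trans_entry
  by (rule suminf_nonneg[OF sums_summable[OF trans_entry_sums]])
     (use assms in \<open>auto intro!: divide_nonneg_nonneg mult_nonneg_nonneg mat_pow_nonneg\<close>)

lemma trans_shift_id: "trans_mat (A + c *\<^sub>R mat 1) t = exp (t * c) *\<^sub>R trans_mat A t"
  for A :: "real^'n^'n"
proof -
  have cm: "(t *\<^sub>R A) ** ((t * c) *\<^sub>R mat 1) = ((t * c) *\<^sub>R mat 1) ** (t *\<^sub>R A)"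
    by (simp add: smult_l smult_r)
  have "trans_mat (A + c *\<^sub>R mat 1) t = trans_mat (t *\<^sub>R A + (t * c) *\<^sub>R mat 1) 1"
    by (simp add: trans_scale[of _ t] scaleR_add_right)
  also have "\<dots> = trans_mat (t *\<^sub>R A) 1 ** (exp (t * c) *\<^sub>R mat 1)"
    by (simp add: trans1_add[OF cm] trans_id)
  also have "\<dots> = exp (t * c) *\<^sub>R trans_mat A t"
    by (simp add: smult_r trans_scale[of A t, symmetric])
  finally show ?thesis .
qed

lemma gen_trans_nonneg:
  assumes g: "gen A" and t: "0 \<le> t"
  shows "0 \<le> trans_mat A t $ i $ j"
proof -
  define c where "c = mnorm A"
  have nn: "0 \<le> (A + c *\<^sub>R mat 1) $ i $ j" for i j
  proof (cases "i = j")
    case True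
    have "\<bar>A $ i $ i\<bar> \<le> c"
      unfolding c_def using row_le_mnorm[of A i] member_le_sum[of i UNIV "\<lambda>j. \<bar>A $ i $ j\<bar>"]
      by simp
    then show ?thesis using True by (simp add: mat_def)
  next
    case False
    then show ?thesis using g by (simp add: gen_def mat_def)
  qed
  have "trans_mat A t = exp (- (t * c)) *\<^sub>R trans_mat (A + c *\<^sub>R mat 1) t"
    by (simp add: trans_shift_id exp_minus_inverse[symmetric] exp_add[symmetric])
  then have "trans_mat A t $ i $ j = exp (- (t * c)) * trans_mat (A + c *\<^sub>R mat 1) t $ i $ j"
    by simp
  also have "0 \<le> \<dots>"
    using trans_nonneg_of_nonneg[OF nn t] by simp
  finally show ?thesis .
qed

lemma gen_pow_rowsum:
  assumes g: "gen A"
  shows "(\<Sum>j\<in>UNIV. mat_pow A k $ i $ j) = (if k = 0 then 1 else 0)"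
proof (induction k arbitrary: i)
  case 0
  then show ?case by (simp add: mat_def)
next
  case (Suc k)
  have "(\<Sum>j\<in>UNIV. mat_pow A (Suc k) $ i $ j) = (\<Sum>l\<in>UNIV. A $ i $ l * (\<Sum>j\<in>UNIV. mat_pow A k $ l $ j))"
    by (simp add: mmult_entry sum_distrib_left) (rule sum.swap)
  also have "\<dots> = (\<Sum>l\<in>UNIV. A $ i $ l) * (if k = 0 then 1 else 0)"
    by (simp add: Suc sum_distrib_right)
  also have "\<dots> = 0" using g by (simp add: gen_def)
  finally show ?case by simp
qed

lemma gen_trans_rowsum:
  assumes g: "gen A"
  shows "(\<Sum>j\<in>UNIV. trans_mat A t $ i $ j) = 1"
proof -
  have "(\<Sum>j\<in>UNIV. trans_mat A t $ i $ j) = (\<Sum>k. \<Sum>j\<in>UNIV. t ^ k / fact k * mat_pow A k $ i $ j)"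
    unfolding trans_entry
    by (rule suminf_sum[symmetric]) (rule sums_summable[OF trans_entry_sums])
  also have "\<dots> = (\<Sum>k. if k = 0 then 1 else 0)"
  proof -
    have "(\<Sum>j\<in>UNIV. t ^ k / fact k * mat_pow A k $ i $ j) = (if k = 0 then 1 else 0)" for k
      by (subst sum_distrib_left[symmetric]) (simp add: gen_pow_rowsum[OF g])
    then show ?thesis by simp
  qed
  also have "\<dots> = 1"
    using sums_single[of 0 "\<lambda>_. 1::real"] by (simp add: sums_iff)
  finally show ?thesis .
qed

lemma gen_trans_le1:
  assumes g: "gen A" and t: "0 \<le> t"
  shows "trans_mat A t $ i $ j \<le> 1"
proof -
  have "trans_mat A t $ i $ j \<le> (\<Sum>j\<in>UNIV. trans_mat A t $ i $ j)"
    by (rule member_le_sum) (use gen_trans_nonneg[OF g t] in auto)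
  then show ?thesis using gen_trans_rowsum[OF g] by simp
qed

lemma trans_taylor:
  fixes A :: "real^'n^'n"
  assumes t: "\<bar>t\<bar> \<le> 1"
  shows "\<bar>trans_mat A t $ i $ j - ((if i = j then 1 else 0) + t * A $ i $ j + t\<^sup>2 / 2 * (A ** A) $ i $ j)\<bar>
          \<le> \<bar>t\<bar> ^ 3 * (mnorm A ^ 3 * exp (mnorm A))"
proof -
  define M where "M = mnorm A"
  have M0: "0 \<le> M" by (simp add: M_def mnorm_nonneg)
  define f where "f = (\<lambda>k. t ^ k / fact k * mat_pow A k $ i $ j)"
  have sf: "summable f" unfolding f_def by (rule sums_summable[OF trans_entry_sums])
  have split: "trans_mat A t $ i $ j = (\<Sum>n. f (n + 3)) + (\<Sum>k<3. f k)"
    unfolding trans_entry f_def[symmetric] by (rule suminf_split_initial_segment[OF sf])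
  have init: "(\<Sum>k<3. f k) = (if i = j then 1 else 0) + t * A $ i $ j + t\<^sup>2 / 2 * (A ** A) $ i $ j"
    by (simp add: f_def numeral_3_eq_3 numeral_2_eq_2 lessThan_Suc mat_entry power2_eq_square)
  define h where "h = (\<lambda>k. \<bar>t\<bar> ^ 3 * (M ^ 3 * (M ^ k / fact k)))"
  have sh: "summable h" unfolding h_def
    using summable_exp_generic[of M] by (intro summable_mult) (simp add: divide_inverse_commute)
  have bnd: "\<bar>f (n + 3)\<bar> \<le> h n" for n
  proof -
    have "\<bar>f (n + 3)\<bar> = \<bar>t\<bar> ^ (n + 3) / fact (n + 3) * \<bar>mat_pow A (n + 3) $ i $ j\<bar>"
      by (simp add: f_def abs_mult power_abs)
    also have "\<dots> \<le> \<bar>t\<bar> ^ (n + 3) / fact (n + 3) * M ^ (n + 3)"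
      by (rule mult_left_mono) (auto simp: M_def mat_pow_entry_bound)
    also have "\<dots> \<le> \<bar>t\<bar> ^ 3 / fact n * M ^ (n + 3)"
    proof (rule mult_right_mono)
      have "\<bar>t\<bar> ^ (n + 3) \<le> \<bar>t\<bar> ^ 3"
        by (subst power_add) (simp add: mult_left_le_one_le power_le_one t)
      moreover have "fact n \<le> (fact (n + 3) :: real)"
        by (rule fact_mono) simp
      ultimately show "\<bar>t\<bar> ^ (n + 3) / fact (n + 3) \<le> \<bar>t\<bar> ^ 3 / fact n"
        by (intro frac_le) auto
    qed (simp add: M0)
    also have "\<dots> = h n"
      by (simp add: h_def power_add field_simps)
    finally show ?thesis .
  qed
  have sab: "summable (\<lambda>n. \<bar>f (n + 3)\<bar>)"
    by (rule summable_comparison_test'[OF sh]) (use bnd in simp)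
  have "\<bar>\<Sum>n. f (n + 3)\<bar> \<le> (\<Sum>n. \<bar>f (n + 3)\<bar>)" by (rule summable_rabs[OF sab])
  also have "\<dots> \<le> suminf h" by (rule suminf_le[OF bnd sab sh])
  also have "suminf h = \<bar>t\<bar> ^ 3 * (M ^ 3 * exp M)"
    unfolding h_def
    using summable_exp_generic[of M]
    by (simp add: suminf_mult exp_def divide_inverse_commute)
  finally show ?thesis using split init by (simp add: M_def)
qed

lemma trans_taylor1:
  fixes A :: "real^'n^'n"
  assumes t: "\<bar>t\<bar> \<le> 1"
  shows "\<bar>trans_mat A t $ i $ j - ((if i = j then 1 else 0) + t * A $ i $ j)\<bar>
          \<le> t\<^sup>2 * (mnorm A ^ 2 + mnorm A ^ 3 * exp (mnorm A))"
proof -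
  define M where "M = mnorm A"
  have M0: "0 \<le> M" by (simp add: M_def mnorm_nonneg)
  have a2: "\<bar>(A ** A) $ i $ j\<bar> \<le> M ^ 2"
    using mat_pow_entry_bound[of A 2 i j] by (simp add: M_def numeral_2_eq_2)
  have t3: "\<bar>t\<bar> ^ 3 = \<bar>t\<bar> * t\<^sup>2"
    by (simp add: numeral_3_eq_3 numeral_2_eq_2)
  have "\<bar>t\<bar> * t\<^sup>2 \<le> t\<^sup>2"
    by (rule mult_left_le_one_le) (auto simp: t)
  then have "\<bar>t\<bar> ^ 3 \<le> t\<^sup>2" using t3 by simp
  then have x: "\<bar>t\<bar> ^ 3 * (M ^ 3 * exp M) \<le> t\<^sup>2 * (M ^ 3 * exp M)"
    by (rule mult_right_mono) (simp add: M0)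
  have "\<bar>t\<^sup>2 / 2 * (A ** A) $ i $ j\<bar> = t\<^sup>2 / 2 * \<bar>(A ** A) $ i $ j\<bar>"
    by (simp add: abs_mult)
  also have "\<dots> \<le> t\<^sup>2 / 2 * M ^ 2"
    by (rule mult_left_mono[OF a2]) simp
  also have "\<dots> \<le> t\<^sup>2 * M ^ 2"
    by (simp add: M0)
  finally have y: "\<bar>t\<^sup>2 / 2 * (A ** A) $ i $ j\<bar> \<le> t\<^sup>2 * M ^ 2" .
  have tay: "\<bar>trans_mat A t $ i $ j - ((if i = j then 1 else 0) + t * A $ i $ j + t\<^sup>2 / 2 * (A ** A) $ i $ j)\<bar>
          \<le> \<bar>t\<bar> ^ 3 * (M ^ 3 * exp M)"
    using trans_taylor[OF t, of A i j] by (simp add: M_def)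
  have "\<bar>trans_mat A t $ i $ j - ((if i = j then 1 else 0) + t * A $ i $ j)\<bar>
        \<le> \<bar>trans_mat A t $ i $ j - ((if i = j then 1 else 0) + t * A $ i $ j + t\<^sup>2 / 2 * (A ** A) $ i $ j)\<bar>
          + \<bar>t\<^sup>2 / 2 * (A ** A) $ i $ j\<bar>"
    by linarith
  also have "\<dots> \<le> t\<^sup>2 * (M ^ 2 + M ^ 3 * exp M)"
  proof -
    have "t\<^sup>2 * (M ^ 2 + M ^ 3 * exp M) = t\<^sup>2 * M ^ 2 + t\<^sup>2 * (M ^ 3 * exp M)"
      by (simp add: algebra_simps)
    then show ?thesis using tay x y by linarith
  qed
  finally show ?thesis by (simp add: M_def)
qed

lemma deriv_from_quad:
  fixes f :: "real \<Rightarrow> real"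
  assumes b: "\<And>h. \<bar>h\<bar> \<le> 1 \<Longrightarrow> \<bar>f (x + h) - f x - h * D\<bar> \<le> K * h\<^sup>2"
  shows "(f has_real_derivative D) (at x)"
  unfolding DERIV_def
proof -
  have bb: "norm ((f (x + h) - f x) / h - D) \<le> \<bar>K\<bar> * \<bar>h\<bar>" if h0: "h \<noteq> 0" and h1: "\<bar>h\<bar> < 1" for h
  proof -
    have "(f (x + h) - f x) / h - D = (f (x + h) - f x - h * D) / h"
      using h0 by (simp add: field_simps)
    then have "norm ((f (x + h) - f x) / h - D) = \<bar>f (x + h) - f x - h * D\<bar> / \<bar>h\<bar>"
      by simp
    also have "\<dots> \<le> K * h\<^sup>2 / \<bar>h\<bar>"
      by (rule divide_right_mono[OF b]) (use h1 in auto)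
    also have "\<dots> \<le> \<bar>K\<bar> * \<bar>h\<bar>"
      using h0 by (simp add: power2_eq_square abs_mult[symmetric] field_simps)
    finally show ?thesis .
  qed
  have "((\<lambda>h. (f (x + h) - f x) / h - D) \<longlongrightarrow> 0) (at 0)"
  proof (rule Lim_null_comparison)
    show "\<forall>\<^sub>F h in at 0. norm ((f (x + h) - f x) / h - D) \<le> \<bar>K\<bar> * \<bar>h\<bar>"
      unfolding eventually_at by (rule exI[of _ 1]) (use bb in auto)
    show "((\<lambda>h. \<bar>K\<bar> * \<bar>h\<bar>) \<longlongrightarrow> 0) (at 0)"
      by (auto intro!: tendsto_eq_intros)
  qed
  then show "((\<lambda>h. (f (x + h) - f x) / h) \<longlongrightarrow> D) (at 0)"
    by (simp add: LIM_zero_iff)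
qed

lemma trans_deriv:
  fixes A :: "real^'n^'n"
  shows "((\<lambda>s. trans_mat A s $ i $ j) has_real_derivative (A ** trans_mat A t) $ i $ j) (at t)"
proof (rule deriv_from_quad)
  fix h :: real assume h: "\<bar>h\<bar> \<le> 1"
  define C where "C = mnorm A ^ 2 + mnorm A ^ 3 * exp (mnorm A)"
  define P where "P = trans_mat A t"
  have pw: "(trans_mat A h $ i $ l - ((if i = l then 1 else 0) + h * A $ i $ l)) * P $ l $ j
       = trans_mat A h $ i $ l * P $ l $ j - (if i = l then P $ l $ j else 0) - h * (A $ i $ l * P $ l $ j)" for l
    by (simp add: algebra_simps)
  have e: "trans_mat A (t + h) $ i $ j - P $ i $ j - h * (A ** P) $ i $ j
      = (\<Sum>l\<in>UNIV. (trans_mat A h $ i $ l - ((if i = l then 1 else 0) + h * A $ i $ l)) * P $ l $ j)"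
    unfolding pw
    by (simp add: P_def add.commute[of t h] trans_add_time mmult_entry sum_subtractf sum_distrib_left)
  have "\<bar>\<Sum>l\<in>UNIV. (trans_mat A h $ i $ l - ((if i = l then 1 else 0) + h * A $ i $ l)) * P $ l $ j\<bar>
        \<le> (\<Sum>l\<in>UNIV. h\<^sup>2 * C * \<bar>P $ l $ j\<bar>)"
  proof (rule order_trans[OF sum_abs], rule sum_mono)
    fix l
    show "\<bar>(trans_mat A h $ i $ l - ((if i = l then 1 else 0) + h * A $ i $ l)) * P $ l $ j\<bar> \<le> h\<^sup>2 * C * \<bar>P $ l $ j\<bar>"
      unfolding abs_mult
      by (rule mult_right_mono[OF trans_taylor1[OF h, of A i l, folded C_def]]) simp
  qed
  also have "\<dots> = (C * (\<Sum>l\<in>UNIV. \<bar>P $ l $ j\<bar>)) * h\<^sup>2"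
    by (simp add: sum_distrib_left algebra_simps)
  finally show "\<bar>trans_mat A (t + h) $ i $ j - trans_mat A t $ i $ j - h * (A ** trans_mat A t) $ i $ j\<bar>
        \<le> (C * (\<Sum>l\<in>UNIV. \<bar>P $ l $ j\<bar>)) * h\<^sup>2"
    using e by (simp add: P_def)
qed

definition T2 :: "(real \<Rightarrow> real) \<Rightarrow> real \<Rightarrow> real \<Rightarrow> real \<Rightarrow> bool" where
  "T2 g a b c \<longleftrightarrow> (\<lambda>e. g e - (a + b * e + c * e\<^sup>2)) \<in> o[at_right 0](\<lambda>e. e\<^sup>2)"

lemma ev_right: "0 < d \<Longrightarrow> (\<And>y. 0 < y \<Longrightarrow> y < d \<Longrightarrow> P y) \<Longrightarrow> eventually P (at_right (0::real))"
  unfolding eventually_at_right_field by (intro exI[of _ d]) auto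

lemma e3_small: "(\<lambda>e::real. e ^ 3) \<in> o[at_right 0](\<lambda>e. e\<^sup>2)"
proof (rule landau_o.smallI)
  fix c :: real assume c: "0 < c"
  show "\<forall>\<^sub>F x in at_right 0. norm ((x::real) ^ 3) \<le> c * norm (x\<^sup>2)"
  proof (rule ev_right[of c])
    fix y :: real assume "0 < y" "y < c"
    then show "norm (y ^ 3) \<le> c * norm (y\<^sup>2)"
      by (simp add: power3_eq_cube power2_eq_square mult_right_mono)
  qed (rule c)
qed

lemma e4_small: "(\<lambda>e::real. e ^ 4) \<in> o[at_right 0](\<lambda>e. e\<^sup>2)"
proof (rule landau_o.smallI)
  fix c :: real assume c: "0 < c"
  show "\<forall>\<^sub>F x in at_right 0. norm ((x::real) ^ 4) \<le> c * norm (x\<^sup>2)"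
  proof (rule ev_right[of "min c 1"])
    fix y :: real assume y: "0 < y" "y < min c 1"
    have "y * y \<le> c" using y by (smt (verit) mult_le_cancel_left1 mult_strict_left_mono)
    then have "y * y * (y * y) \<le> c * (y * y)" by (rule mult_right_mono) simp
    then show "norm (y ^ 4) \<le> c * norm (y\<^sup>2)"
      using y by (simp add: power2_eq_square power4_eq_xxxx mult.assoc)
  qed (use c in simp)
qed

lemma e2_big1: "(\<lambda>e::real. e\<^sup>2) \<in> O[at_right 0](\<lambda>_. 1)"
proof (rule landau_o.bigI[of 1])
  show "\<forall>\<^sub>F x in at_right 0. norm ((x::real)\<^sup>2) \<le> 1 * norm (1::real)"
  proof (rule ev_right[of 1])
    fix y :: real assume "0 < y" "y < 1"
    then show "norm (y\<^sup>2) \<le> 1 * norm (1::real)"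
      by (simp add: power_le_one)
  qed simp
qed simp

lemma poly_big1: "(\<lambda>e::real. a + b * e + c * e\<^sup>2) \<in> O[at_right 0](\<lambda>_. 1)"
proof (rule landau_o.bigI[of "\<bar>a\<bar> + \<bar>b\<bar> + \<bar>c\<bar> + 1"])
  show "\<forall>\<^sub>F x in at_right 0. norm (a + b * x + c * x\<^sup>2) \<le> (\<bar>a\<bar> + \<bar>b\<bar> + \<bar>c\<bar> + 1) * norm (1::real)"
  proof (rule ev_right[of 1])
    fix y :: real assume y: "0 < y" "y < 1"
    have "\<bar>b * y\<bar> \<le> \<bar>b\<bar>" using y by (simp add: abs_mult mult_right_le_one_le)
    moreover have "\<bar>c * y\<^sup>2\<bar> \<le> \<bar>c\<bar>" using y
      by (simp add: abs_mult mult_left_le_one_le power_le_one) (simp add: mult_left_le power_le_one)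
    ultimately show "norm (a + b * y + c * y\<^sup>2) \<le> (\<bar>a\<bar> + \<bar>b\<bar> + \<bar>c\<bar> + 1) * norm (1::real)"
      by simp
  qed simp
qed simp

lemma T2_coeffs: "T2 g a b c \<Longrightarrow> a = a' \<Longrightarrow> b = b' \<Longrightarrow> c = c' \<Longrightarrow> T2 g a' b' c'"
  by simp

lemma T2_cong: "eventually (\<lambda>e. g e = h e) (at_right 0) \<Longrightarrow> T2 h a b c \<Longrightarrow> T2 g a b c"
  unfolding T2_def by (rule landau_o.small.in_cong[THEN iffD2]) (auto elim: eventually_mono)

lemma T2_const: "T2 (\<lambda>_. a) a 0 0"
  by (simp add: T2_def)

lemma T2_id: "T2 (\<lambda>e. e) 0 1 0"
  by (simp add: T2_def)

lemma T2_add: "T2 f a b c \<Longrightarrow> T2 g a' b' c' \<Longrightarrow> T2 (\<lambda>e. f e + g e) (a + a') (b + b') (c + c')"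
  unfolding T2_def
  by (drule (1) sum_in_smallo(1)) (simp add: algebra_simps)

lemma T2_diff: "T2 f a b c \<Longrightarrow> T2 g a' b' c' \<Longrightarrow> T2 (\<lambda>e. f e - g e) (a - a') (b - b') (c - c')"
  unfolding T2_def
  by (drule (1) sum_in_smallo(2)) (simp add: algebra_simps)

lemma T2_mult:
  assumes f: "T2 f a b c" and g: "T2 g a' b' c'"
  shows "T2 (\<lambda>e. f e * g e) (a * a') (a * b' + b * a') (a * c' + b * b' + c * a')"
proof -
  define r1 where "r1 = (\<lambda>e. f e - (a + b * e + c * e\<^sup>2))"
  define r2 where "r2 = (\<lambda>e. g e - (a' + b' * e + c' * e\<^sup>2))"
  have r1: "r1 \<in> o[at_right 0](\<lambda>e. e\<^sup>2)" using f by (simp add: T2_def r1_def)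
  have r2: "r2 \<in> o[at_right 0](\<lambda>e. e\<^sup>2)" using g by (simp add: T2_def r2_def)
  have p1: "(\<lambda>e::real. a + b * e + c * e\<^sup>2) \<in> O[at_right 0](\<lambda>_. 1)" by (rule poly_big1)
  have p2: "(\<lambda>e::real. a' + b' * e + c' * e\<^sup>2) \<in> O[at_right 0](\<lambda>_. 1)" by (rule poly_big1)
  have t1: "(\<lambda>e. (a + b * e + c * e\<^sup>2) * r2 e) \<in> o[at_right 0](\<lambda>e. e\<^sup>2)"
    using landau_o.big_small_mult[OF p1 r2] by simp
  have t2: "(\<lambda>e. r1 e * (a' + b' * e + c' * e\<^sup>2)) \<in> o[at_right 0](\<lambda>e. e\<^sup>2)"
    using landau_o.small_big_mult[OF r1 p2] by simp
  have r2b: "r2 \<in> O[at_right 0](\<lambda>_. 1)"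
    by (rule landau_o.big_trans[OF landau_o.small_imp_big[OF r2] e2_big1])
  have t3: "(\<lambda>e. r1 e * r2 e) \<in> o[at_right 0](\<lambda>e. e\<^sup>2)"
    using landau_o.small_big_mult[OF r1 r2b] by simp
  have t4: "(\<lambda>e. (b * c' + c * b') * e ^ 3 + (c * c') * e ^ 4) \<in> o[at_right 0](\<lambda>e. e\<^sup>2)"
    by (intro sum_in_smallo landau_o.small.mult_left e3_small e4_small)
       (auto intro: landau_o.small.cmult_in_iff[THEN iffD2] e3_small e4_small)
  have "(\<lambda>e. (a + b * e + c * e\<^sup>2) * r2 e + r1 e * (a' + b' * e + c' * e\<^sup>2) + r1 e * r2 e
           + ((b * c' + c * b') * e ^ 3 + (c * c') * e ^ 4)) \<in> o[at_right 0](\<lambda>e. e\<^sup>2)"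
    by (intro sum_in_smallo t1 t2 t3 t4)
  moreover have "(\<lambda>e. (a + b * e + c * e\<^sup>2) * r2 e + r1 e * (a' + b' * e + c' * e\<^sup>2) + r1 e * r2 e
           + ((b * c' + c * b') * e ^ 3 + (c * c') * e ^ 4))
      = (\<lambda>e. f e * g e - (a * a' + (a * b' + b * a') * e + (a * c' + b * b' + c * a') * e\<^sup>2))"
    by (rule ext) (simp add: r1_def r2_def algebra_simps power2_eq_square power3_eq_cube power4_eq_xxxx)
  ultimately show ?thesis by (simp add: T2_def)
qed

lemma T2_cmult: "T2 f a b c \<Longrightarrow> T2 (\<lambda>e. k * f e) (k * a) (k * b) (k * c)"
  by (drule T2_mult[OF T2_const]) simp

lemma T2_sum: "finite S \<Longrightarrow> (\<And>x. x \<in> S \<Longrightarrow> T2 (f x) (a x) (b x) (c x)) \<Longrightarrow>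
    T2 (\<lambda>e. \<Sum>x\<in>S. f x e) (\<Sum>x\<in>S. a x) (\<Sum>x\<in>S. b x) (\<Sum>x\<in>S. c x)"
proof (induction S rule: finite_induct)
  case empty
  then show ?case using T2_const[of 0] by simp
next
  case (insert x F)
  then show ?case using T2_add[of "f x" "a x" "b x" "c x" "\<lambda>e. \<Sum>x\<in>F. f x e"] by simp
qed

lemma T2_from_cubic:
  assumes "\<And>e. 0 < e \<Longrightarrow> e < 1 \<Longrightarrow> \<bar>g e - (a + b * e + c * e\<^sup>2)\<bar> \<le> K * e ^ 3"
  shows "T2 g a b c"
proof -
  have "(\<lambda>e. g e - (a + b * e + c * e\<^sup>2)) \<in> O[at_right 0](\<lambda>e. e ^ 3)"
  proof (rule landau_o.bigI[of "\<bar>K\<bar> + 1"])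
    show "\<forall>\<^sub>F x in at_right 0. norm (g x - (a + b * x + c * x\<^sup>2)) \<le> (\<bar>K\<bar> + 1) * norm (x ^ 3)"
    proof (rule ev_right[of 1])
      fix y :: real assume y: "0 < y" "y < 1"
      have "K * y ^ 3 \<le> (\<bar>K\<bar> + 1) * y ^ 3"
        by (rule mult_right_mono) (use y in auto)
      then show "norm (g y - (a + b * y + c * y\<^sup>2)) \<le> (\<bar>K\<bar> + 1) * norm (y ^ 3)"
        using assms[OF y] y by (simp only: real_norm_def abs_of_pos[OF zero_less_power[OF y(1)]])
    qed simp
  qed simp
  then show ?thesis unfolding T2_def
    by (rule landau_o.big_small_trans[OF _ e3_small])
qed

lemma T2_trans:
  fixes A :: "real^'n^'n"
  shows "T2 (\<lambda>e. trans_mat A e $ i $ j) (if i = j then 1 else 0) (A $ i $ j) ((A ** A) $ i $ j / 2)"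
proof (rule T2_from_cubic[where K = "mnorm A ^ 3 * exp (mnorm A)"])
  fix e :: real assume e: "0 < e" "e < 1"
  have "\<bar>e\<bar> \<le> 1" using e by simp
  from trans_taylor[OF this, of A i j] e show
    "\<bar>trans_mat A e $ i $ j - ((if i = j then 1 else 0) + A $ i $ j * e + (A ** A) $ i $ j / 2 * e\<^sup>2)\<bar>
      \<le> mnorm A ^ 3 * exp (mnorm A) * e ^ 3"
    by (simp add: algebra_simps)
qed

lemma T2_trans_neg:
  fixes A :: "real^'n^'n"
  shows "T2 (\<lambda>e. trans_mat A (- e) $ i $ j) (if i = j then 1 else 0) (- A $ i $ j) ((A ** A) $ i $ j / 2)"
proof (rule T2_from_cubic[where K = "mnorm A ^ 3 * exp (mnorm A)"])
  fix e :: real assume e: "0 < e" "e < 1"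
  have "\<bar>- e\<bar> \<le> 1" using e by simp
  from trans_taylor[OF this, of A i j] e show
    "\<bar>trans_mat A (- e) $ i $ j - ((if i = j then 1 else 0) + - A $ i $ j * e + (A ** A) $ i $ j / 2 * e\<^sup>2)\<bar>
      \<le> mnorm A ^ 3 * exp (mnorm A) * e ^ 3"
    by (simp add: algebra_simps)
qed

lemma poly_has_integral:
  fixes a b e :: real
  assumes "0 \<le> e"
  shows "((\<lambda>t. a + b * t) has_integral (a * e + b / 2 * e\<^sup>2)) {0..e}"
proof -
  have "((\<lambda>t. a + b * t) has_integral ((\<lambda>t. a * t + b / 2 * t\<^sup>2) e - (\<lambda>t. a * t + b / 2 * t\<^sup>2) 0)) {0..e}"
    by (rule fundamental_theorem_of_calculus[OF assms])
       (auto intro!: derivative_eq_intros simp: has_real_derivative_iff_has_vector_derivative[symmetric])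
  then show ?thesis by simp
qed

lemma T2_integral:
  fixes g :: "real \<Rightarrow> real"
  assumes cont: "continuous_on {0..} g" and d: "(g has_real_derivative g1) (at 0 within {0..})"
  shows "T2 (\<lambda>e. integral {0..e} g) 0 (g 0) (g1 / 2)"
  unfolding T2_def
proof (rule landau_o.smallI)
  fix c :: real assume c: "0 < c"
  have "((\<lambda>y. (g y - g 0) / (y - 0)) \<longlongrightarrow> g1) (at 0 within {0..})"
    using d by (simp add: has_field_derivative_iff)
  then have "((\<lambda>y. (g y - g 0) / (y - 0)) \<longlongrightarrow> g1) (at_right 0)"
    by (rule tendsto_within_subset) auto
  then have "\<forall>\<^sub>F y in at_right 0. dist ((g y - g 0) / (y - 0)) g1 < c"
    using tendsto_iff[THEN iffD1] c by blast
  then obtain d where d0: "d > 0" and dd: "\<And>y. 0 < y \<Longrightarrow> y < d \<Longrightarrow> \<bar>(g y - g 0) / y - g1\<bar> < c"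
    unfolding eventually_at_right_field dist_real_def by auto
  have rb: "\<bar>g t - g 0 - g1 * t\<bar> \<le> c * t" if "0 \<le> t" "t < d" for t
  proof (cases "t = 0")
    case True then show ?thesis by simp
  next
    case False
    then have t: "0 < t" using that by simp
    have "g t - g 0 - g1 * t = t * ((g t - g 0) / t - g1)" using t by (simp add: field_simps)
    then have "\<bar>g t - g 0 - g1 * t\<bar> = t * \<bar>(g t - g 0) / t - g1\<bar>" using t by (simp add: abs_mult)
    also have "\<dots> \<le> t * c" using dd[OF t that(2)] t by simp
    finally show ?thesis by (simp add: mult.commute)
  qed
  show "\<forall>\<^sub>F e in at_right 0. norm (integral {0..e} g - (0 + g 0 * e + g1 / 2 * e\<^sup>2)) \<le> c * norm (e\<^sup>2)"
  proof (rule ev_right[OF d0])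
    fix e :: real assume e: "0 < e" "e < d"
    have ig: "g integrable_on {0..e}"
      by (rule integrable_continuous_real) (rule continuous_on_subset[OF cont], auto)
    have ip: "((\<lambda>t. g 0 + g1 * t) has_integral (g 0 * e + g1 / 2 * e\<^sup>2)) {0..e}"
      by (rule poly_has_integral) (use e in simp)
    have ic: "((\<lambda>t. 0 + c * t) has_integral (0 * e + c / 2 * e\<^sup>2)) {0..e}"
      by (rule poly_has_integral) (use e in simp)
    have "integral {0..e} g - (g 0 * e + g1 / 2 * e\<^sup>2) = integral {0..e} (\<lambda>t. g t - (g 0 + g1 * t))"
      using integral_diff[OF ig has_integral_integrable[OF ip]] integral_unique[OF ip] by simp
    also have "norm \<dots> \<le> integral {0..e} (\<lambda>t. 0 + c * t)"
    proof (rule integral_norm_bound_integral)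
      show "(\<lambda>t. g t - (g 0 + g1 * t)) integrable_on {0..e}"
        by (rule integrable_diff[OF ig has_integral_integrable[OF ip]])
      show "(\<lambda>t. 0 + c * t) integrable_on {0..e}" by (rule has_integral_integrable[OF ic])
      show "norm (g t - (g 0 + g1 * t)) \<le> 0 + c * t" if "t \<in> {0..e}" for t
        using rb[of t] that e by (simp add: algebra_simps)
    qed
    also have "\<dots> = c / 2 * e\<^sup>2" using integral_unique[OF ic] by simp
    also have "\<dots> \<le> c * norm (e\<^sup>2)" using c by simp
    finally show "norm (integral {0..e} g - (0 + g 0 * e + g1 / 2 * e\<^sup>2)) \<le> c * norm (e\<^sup>2)"
      by simp
  qed
qed

lemma condI_LI:
  fixes g :: "real \<Rightarrow> 'n::finite \<Rightarrow> real^'n \<Rightarrow> real"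
  assumes I: "cond_I D g" and q: "q \<in> D j" and c: "continuous_on {0..} (\<lambda>t. g t j q)"
  shows "set_integrable lborel {0..} (\<lambda>t. g t j q)"
proof -
  define C where "C = norm q + 1"
  have C: "C > 0" by (simp add: C_def add_nonneg_pos)
  define S where "S = {(i, q). q \<in> D i \<and> norm q \<le> C}"
  have fin: "(\<integral>\<^sup>+ t. indicator {0..} t * (SUP p \<in> S. ennreal \<bar>g t (fst p) (snd p)\<bar>) \<partial>lborel) < \<infinity>"
    using I C unfolding cond_I_def S_def by blast
  have jq: "(j, q) \<in> S" using q by (simp add: S_def C_def)
  have le: "ennreal (norm (indicator {0..} t *\<^sub>R g t j q)) \<le> indicator {0..} t * (SUP p \<in> S. ennreal \<bar>g t (fst p) (snd p)\<bar>)" for t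
  proof (cases "0 \<le> t")
    case True
    have "ennreal \<bar>g t j q\<bar> \<le> (SUP p \<in> S. ennreal \<bar>g t (fst p) (snd p)\<bar>)"
      using SUP_upper[OF jq, of "\<lambda>p. ennreal \<bar>g t (fst p) (snd p)\<bar>"] by simp
    then show ?thesis using True by (simp add: indicator_def)
  qed (simp add: indicator_def)
  show ?thesis
    unfolding set_integrable_def
  proof (rule integrableI_bounded)
    show "(\<lambda>t. indicator {0..} t *\<^sub>R g t j q) \<in> borel_measurable lborel"
      using borel_measurable_continuous_on_indicator[OF _ c] by simp
    show "(\<integral>\<^sup>+ t. ennreal (norm (indicator {0..} t *\<^sub>R g t j q)) \<partial>lborel) < \<infinity>"
      by (rule le_less_trans[OF nn_integral_mono fin]) (rule le)
  qed
qed

lemma LI_mult_bounded: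
  fixes u h :: "real \<Rightarrow> real"
  assumes h: "set_integrable lborel S h" and S: "S \<in> sets borel"
    and cu: "continuous_on S u" and ch: "continuous_on S h" and b: "\<And>t. t \<in> S \<Longrightarrow> \<bar>u t\<bar> \<le> 1"
  shows "set_integrable lborel S (\<lambda>t. u t * h t)"
  unfolding set_integrable_def
proof (rule Bochner_Integration.integrable_bound[OF h[unfolded set_integrable_def]])
  show "(\<lambda>t. indicator S t *\<^sub>R (u t * h t)) \<in> borel_measurable lborel"
    using borel_measurable_continuous_on_indicator[OF S continuous_on_mult[OF cu ch]] by simp
  show "AE t in lborel. norm (indicator S t *\<^sub>R (u t * h t)) \<le> norm (indicator S t *\<^sub>R h t)"
  proof (rule AE_I2)
    fix t show "norm (indicator S t *\<^sub>R (u t * h t)) \<le> norm (indicator S t *\<^sub>R h t)"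
    proof (cases "t \<in> S")
      case True
      then show ?thesis using b[OF True] by (simp add: abs_mult mult_left_le_one_le)
    qed simp
  qed
qed

lemma LI_HK:
  fixes h :: "real \<Rightarrow> real"
  assumes "set_integrable lborel S h"
  shows "h integrable_on S" "set_lebesgue_integral lborel S h = integral S h"
  using set_borel_integral_eq_integral[OF assms] by auto

lemma LI_lim:
  fixes h :: "real \<Rightarrow> real"
  assumes h: "set_integrable lborel {a..} h"
  shows "((\<lambda>T. integral {a..T} h) \<longlongrightarrow> integral {a..} h) at_top"
proof -
  have "((\<lambda>b. set_lebesgue_integral lborel {a..b} h) \<longlongrightarrow> set_lebesgue_integral lborel {a..} h) at_top"
    by (rule tendsto_set_lebesgue_integral_at_top) (auto simp: h)
  moreover have "set_lebesgue_integral lborel {a..b} h = integral {a..b} h" for b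
    by (rule LI_HK(2)[OF set_integrable_subset[OF h]]) auto
  ultimately show ?thesis using LI_HK(2)[OF h] by simp
qed

lemma trans_cont: "continuous_on S (\<lambda>s. trans_mat A (s - e) $ i $ j)"
proof -
  have "isCont (\<lambda>s. trans_mat A s $ i $ j) x" for x
    by (rule DERIV_isCont[OF trans_deriv])
  then have "continuous_on UNIV (\<lambda>s. trans_mat A s $ i $ j)"
    by (simp add: continuous_on_eq_continuous_at)
  then show ?thesis
    by (rule continuous_on_compose2[of UNIV _ S "\<lambda>s. s - e", simplified])
       (auto intro!: continuous_intros)
qed

lemma vanish_at_top:
  fixes h h' :: "real \<Rightarrow> real"
  assumes d: "\<And>t. 0 \<le> t \<Longrightarrow> (h has_real_derivative h' t) (at t within {0..})"
    and Ih: "set_integrable lborel {0..} h" and Ih': "set_integrable lborel {0..} h'"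
  shows "(h \<longlongrightarrow> 0) at_top"
proof -
  have ftc: "integral {0..T} h' = h T - h 0" if T: "0 \<le> T" for T
  proof -
    have "(h' has_integral (h T - h 0)) {0..T}"
    proof (rule fundamental_theorem_of_calculus[OF T])
      fix x assume x: "x \<in> {0..T}"
      have "(h has_real_derivative h' x) (at x within {0..T})"
        by (rule DERIV_subset[OF d]) (use x in auto)
      then show "(h has_vector_derivative h' x) (at x within {0..T})"
        by (simp add: has_real_derivative_iff_has_vector_derivative)
    qed
    then show ?thesis by (rule integral_unique)
  qed
  define l where "l = h 0 + integral {0..} h'"
  have "((\<lambda>T. h 0 + integral {0..T} h') \<longlongrightarrow> l) at_top"
    unfolding l_def by (intro tendsto_add tendsto_const LI_lim Ih')
  moreover have "eventually (\<lambda>T. h 0 + integral {0..T} h' = h T) at_top"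
    using eventually_ge_at_top[of "0::real"] by eventually_elim (simp add: ftc)
  ultimately have hl: "(h \<longlongrightarrow> l) at_top"
    by (rule Lim_transform_eventually)
  have "l = 0"
  proof (rule ccontr)
    assume l0: "l \<noteq> 0"
    then have "\<bar>l\<bar> / 2 > 0" by simp
    with hl have "eventually (\<lambda>T. dist (h T) l < \<bar>l\<bar> / 2) at_top"
      using tendsto_iff[THEN iffD1] by blast
    then obtain T1 where T1: "\<And>T. T \<ge> T1 \<Longrightarrow> dist (h T) l < \<bar>l\<bar> / 2"
      unfolding eventually_at_top_linorder by blast
    define T0 where "T0 = max T1 0"
    have hb: "\<bar>l\<bar> / 2 \<le> \<bar>h T\<bar>" if "T \<ge> T0" for T
      using T1[of T] that by (simp add: T0_def dist_real_def) (smt (verit))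
    have Ia: "set_integrable lborel {0..} (\<lambda>t. \<bar>h t\<bar>)" by (rule set_integrable_abs[OF Ih])
    define M where "M = integral {0..} (\<lambda>t. \<bar>h t\<bar>)"
    define T where "T = T0 + 2 * (\<bar>M\<bar> + 1) / \<bar>l\<bar>"
    have TT0: "T0 \<le> T" using l0 by (simp add: T_def)
    have "integral {T0..T} (\<lambda>t. \<bar>l\<bar> / 2) \<le> integral {T0..T} (\<lambda>t. \<bar>h t\<bar>)"
    proof (rule integral_le)
      show "(\<lambda>t. \<bar>l\<bar> / 2) integrable_on {T0..T}" by (rule integrable_const_ivl)
      show "(\<lambda>t. \<bar>h t\<bar>) integrable_on {T0..T}"
        by (rule LI_HK(1)[OF set_integrable_subset[OF Ia]]) (auto simp: T0_def)
    qed (use hb in auto)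
    also have "\<dots> \<le> M" unfolding M_def
    proof (rule integral_subset_le)
      show "(\<lambda>t. \<bar>h t\<bar>) integrable_on {T0..T}"
        by (rule LI_HK(1)[OF set_integrable_subset[OF Ia]]) (auto simp: T0_def)
      show "(\<lambda>t. \<bar>h t\<bar>) integrable_on {0..}" by (rule LI_HK(1)[OF Ia])
    qed (auto simp: T0_def)
    finally have "(T - T0) * (\<bar>l\<bar> / 2) \<le> M" using TT0 by (simp add: content_real)
    moreover have "(T - T0) * (\<bar>l\<bar> / 2) = \<bar>M\<bar> + 1" using l0 by (simp add: T_def field_simps)
    ultimately show False by linarith
  qed
  then show ?thesis using hl by simp
qed

lemma R_bound: "gen A \<Longrightarrow> 0 \<le> t \<Longrightarrow> \<bar>trans_mat A t $ i $ j\<bar> \<le> 1"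
  using gen_trans_nonneg[of A t i j] gen_trans_le1[of A t i j] by simp

lemma LI_sum:
  fixes f :: "'k \<Rightarrow> real \<Rightarrow> real"
  assumes "\<And>k. k \<in> K \<Longrightarrow> set_integrable lborel S (f k)"
  shows "set_integrable lborel S (\<lambda>t. \<Sum>k\<in>K. f k t)"
proof -
  have "(\<lambda>x. indicator S x *\<^sub>R (\<Sum>k\<in>K. f k x)) = (\<lambda>x. \<Sum>k\<in>K. indicator S x *\<^sub>R f k x)"
    by (simp add: sum_distrib_left)
  moreover have "integrable lborel (\<lambda>x. \<Sum>k\<in>K. indicator S x *\<^sub>R f k x)"
    by (rule Bochner_Integration.integrable_sum) (use assms in \<open>simp add: set_integrable_def\<close>)
  ultimately show ?thesis unfolding set_integrable_def by simp
qed

lemma LI_Rpsi: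
  fixes h :: "real \<Rightarrow> real"
  assumes g: "gen A" and e: "0 \<le> e" and I: "set_integrable lborel {0..} h" and c: "continuous_on {0..} h"
  shows "set_integrable lborel {e..} (\<lambda>t. trans_mat A (t - e) $ l $ k * h t)"
proof (rule LI_mult_bounded)
  show "set_integrable lborel {e..} h"
    by (rule set_integrable_subset[OF I]) (use e in auto)
  show "continuous_on {e..} h" by (rule continuous_on_subset[OF c]) (use e in auto)
  show "\<bar>trans_mat A (t - e) $ l $ k\<bar> \<le> 1" if "t \<in> {e..}" for t
    by (rule R_bound[OF g]) (use that in auto)
qed (auto intro: trans_cont)

lemma LI_Rpsi0:
  fixes h :: "real \<Rightarrow> real"
  assumes g: "gen A" and I: "set_integrable lborel {0..} h" and c: "continuous_on {0..} h"
  shows "set_integrable lborel {0..} (\<lambda>t. trans_mat A t $ l $ k * h t)"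
  using LI_Rpsi[OF g order_refl I c, of l k] by simp

lemma tail_decomp:
  fixes psi :: "'n::finite \<Rightarrow> real \<Rightarrow> real" and M A :: "real^'n^'n"
  assumes g: "gen A" and e: "0 \<le> e" and I: "\<And>k. set_integrable lborel {0..} (psi k)"
    and c: "\<And>k. continuous_on {0..} (psi k)"
  shows "integral {e..} (\<lambda>t. \<Sum>j\<in>UNIV. (M ** trans_mat A (t - e)) $ i $ j * psi j t)
       = (\<Sum>l\<in>UNIV. M $ i $ l * integral {e..} (\<lambda>t. \<Sum>k\<in>UNIV. trans_mat A (t - e) $ l $ k * psi k t))"
proof -
  have pw: "(\<Sum>j\<in>UNIV. (M ** trans_mat A (t - e)) $ i $ j * psi j t)
      = (\<Sum>l\<in>UNIV. M $ i $ l * (\<Sum>k\<in>UNIV. trans_mat A (t - e) $ l $ k * psi k t))" for t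
    by (simp add: mmult_entry sum_distrib_left sum_distrib_right mult.assoc) (rule sum.swap)
  have int: "(\<lambda>t. M $ i $ l * (\<Sum>k\<in>UNIV. trans_mat A (t - e) $ l $ k * psi k t)) integrable_on {e..}" for l
    using integrable_cmul[OF LI_HK(1)[OF LI_sum[OF LI_Rpsi[OF g e I c]]], of "M $ i $ l"] by simp
  show ?thesis
    unfolding pw by (simp add: integral_sum[OF _ int])
qed

lemma cont_of_deriv:
  assumes "\<And>t. 0 \<le> t \<Longrightarrow> (h has_real_derivative h' t) (at t within {0..})"
  shows "continuous_on {0..} h"
  unfolding continuous_on_eq_continuous_within
proof
  fix x :: real assume "x \<in> {0..}"
  then show "continuous (at x within {0..}) h" by (intro DERIV_continuous[OF assms]) simp
qed

lemma ibp:
  fixes A :: "real^'n^'n" and psi psi' :: "'n \<Rightarrow> real \<Rightarrow> real"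
  assumes g: "gen A"
    and d: "\<And>k t. 0 \<le> t \<Longrightarrow> (psi k has_real_derivative psi' k t) (at t within {0..})"
    and c': "\<And>k. continuous_on {0..} (psi' k)"
    and I: "\<And>k. set_integrable lborel {0..} (psi k)"
    and I': "\<And>k. set_integrable lborel {0..} (psi' k)"
  shows "integral {0..} (\<lambda>t. \<Sum>k\<in>UNIV. trans_mat A t $ j $ k * psi' k t)
       = - psi j 0 - (\<Sum>l\<in>UNIV. A $ j $ l * integral {0..} (\<lambda>t. \<Sum>k\<in>UNIV. trans_mat A t $ l $ k * psi k t))"
proof -
  have c: "continuous_on {0..} (psi k)" for k by (rule cont_of_deriv[OF d])
  define u where "u = (\<lambda>l t. \<Sum>k\<in>UNIV. trans_mat A t $ l $ k * psi k t)"
  define w where "w = (\<lambda>t. \<Sum>k\<in>UNIV. trans_mat A t $ j $ k * psi' k t)"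
  have Iu: "set_integrable lborel {0..} (u l)" for l
    unfolding u_def by (rule LI_sum, rule LI_Rpsi0[OF g I c])
  have Iw: "set_integrable lborel {0..} w"
    unfolding w_def by (rule LI_sum, rule LI_Rpsi0[OF g I' c'])
  have Iu_T: "u l integrable_on {0..T}" for l T
    by (rule LI_HK(1)[OF set_integrable_subset[OF Iu]]) auto
  have Iw_T: "w integrable_on {0..T}" for T
    by (rule LI_HK(1)[OF set_integrable_subset[OF Iw]]) auto
  have key: "u j T - u j 0 = (\<Sum>l\<in>UNIV. A $ j $ l * integral {0..T} (u l)) + integral {0..T} w"
    if T: "0 \<le> T" for T
  proof -
    have "((\<lambda>t. (\<Sum>l\<in>UNIV. A $ j $ l * u l t) + w t) has_integral (u j T - u j 0)) {0..T}"
    proof (rule fundamental_theorem_of_calculus[OF T])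
      fix x assume x: "x \<in> {0..T}"
      have dd: "(u j has_real_derivative
          (\<Sum>k\<in>UNIV. (A ** trans_mat A x) $ j $ k * psi k x + psi' k x * trans_mat A x $ j $ k))
          (at x within {0..T})"
      proof -
        have "((\<lambda>t. trans_mat A t $ j $ k * psi k t) has_real_derivative
           (A ** trans_mat A x) $ j $ k * psi k x + psi' k x * trans_mat A x $ j $ k) (at x within {0..T})" for k
        proof (rule DERIV_mult)
          show "((\<lambda>t. trans_mat A t $ j $ k) has_real_derivative (A ** trans_mat A x) $ j $ k) (at x within {0..T})"
            by (rule has_field_derivative_at_within[OF trans_deriv])
          show "(psi k has_real_derivative psi' k x) (at x within {0..T})"
            by (rule DERIV_subset[OF d]) (use x in auto)
        qed
        then show ?thesis unfolding u_def
          by (rule DERIV_sum[of UNIV "\<lambda>t k. trans_mat A t $ j $ k * psi k t"])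
      qed
      have eq: "(\<Sum>k\<in>UNIV. (A ** trans_mat A x) $ j $ k * psi k x + psi' k x * trans_mat A x $ j $ k)
          = (\<Sum>l\<in>UNIV. A $ j $ l * u l x) + w x"
      proof -
        have "(\<Sum>k\<in>UNIV. (A ** trans_mat A x) $ j $ k * psi k x) = (\<Sum>l\<in>UNIV. A $ j $ l * u l x)"
          unfolding u_def
          by (simp add: mmult_entry sum_distrib_left sum_distrib_right mult.assoc) (rule sum.swap)
        then show ?thesis by (simp add: w_def sum.distrib mult.commute)
      qed
      show "(u j has_vector_derivative (\<Sum>l\<in>UNIV. A $ j $ l * u l x) + w x) (at x within {0..T})"
        using dd unfolding eq by (simp add: has_real_derivative_iff_has_vector_derivative)
    qed
    then have "u j T - u j 0 = integral {0..T} (\<lambda>t. (\<Sum>l\<in>UNIV. A $ j $ l * u l t) + w t)"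
      by (rule integral_unique[symmetric])
    also have "\<dots> = integral {0..T} (\<lambda>t. \<Sum>l\<in>UNIV. A $ j $ l * u l t) + integral {0..T} w"
    proof (rule integral_add)
      show "(\<lambda>t. \<Sum>l\<in>UNIV. A $ j $ l * u l t) integrable_on {0..T}"
        by (rule integrable_sum) (use integrable_cmul[OF Iu_T] in simp_all)
    qed (rule Iw_T)
    also have "integral {0..T} (\<lambda>t. \<Sum>l\<in>UNIV. A $ j $ l * u l t) = (\<Sum>l\<in>UNIV. A $ j $ l * integral {0..T} (u l))"
      by (subst integral_sum) (use integrable_cmul[OF Iu_T] in simp_all)
    finally show ?thesis .
  qed
  have u0: "u j 0 = psi j 0"
    by (simp add: u_def trans_zero mat_entry if_distrib if_distribR cong: if_cong)
  have lim1: "((\<lambda>T. (\<Sum>l\<in>UNIV. A $ j $ l * integral {0..T} (u l)) + integral {0..T} w)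
      \<longlongrightarrow> (\<Sum>l\<in>UNIV. A $ j $ l * integral {0..} (u l)) + integral {0..} w) at_top"
    by (intro tendsto_add tendsto_sum tendsto_mult tendsto_const LI_lim Iu Iw)
  have vz: "(psi k \<longlongrightarrow> 0) at_top" for k
    by (rule vanish_at_top[OF d I I'])
  have uz: "(u j \<longlongrightarrow> 0) at_top"
  proof (rule Lim_null_comparison)
    show "\<forall>\<^sub>F T in at_top. norm (u j T) \<le> (\<Sum>k\<in>UNIV. \<bar>psi k T\<bar>)"
      using eventually_ge_at_top[of "0::real"]
    proof eventually_elim
      case (elim T)
      have "norm (u j T) \<le> (\<Sum>k\<in>UNIV. \<bar>trans_mat A T $ j $ k * psi k T\<bar>)"
        unfolding u_def real_norm_def by (rule sum_abs)
      also have "\<dots> \<le> (\<Sum>k\<in>UNIV. \<bar>psi k T\<bar>)"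
        by (rule sum_mono) (use R_bound[OF g elim] in \<open>auto simp: abs_mult intro: mult_left_le_one_le\<close>)
      finally show ?case .
    qed
    show "((\<lambda>T. \<Sum>k\<in>UNIV. \<bar>psi k T\<bar>) \<longlongrightarrow> 0) at_top"
      using tendsto_sum[of UNIV "\<lambda>k T. \<bar>psi k T\<bar>" "\<lambda>_. 0" at_top] tendsto_rabs_zero[OF vz] by simp
  qed
  have lim2: "((\<lambda>T. u j T - u j 0) \<longlongrightarrow> 0 - psi j 0) at_top"
    using tendsto_diff[OF uz tendsto_const[of "u j 0"]] u0 by simp
  have ev: "eventually (\<lambda>T. u j T - u j 0 = (\<Sum>l\<in>UNIV. A $ j $ l * integral {0..T} (u l)) + integral {0..T} w) at_top"
    using eventually_ge_at_top[of "0::real"] by eventually_elim (rule key)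
  have "0 - psi j 0 = (\<Sum>l\<in>UNIV. A $ j $ l * integral {0..} (u l)) + integral {0..} w"
    by (rule tendsto_unique[OF _ Lim_transform_eventually[OF lim2 ev] lim1]) simp
  then show ?thesis by (simp add: u_def w_def)
qed

lemma trans_cont0: "continuous_on S (\<lambda>s. trans_mat A s $ i $ j)"
  using trans_cont[of S A 0 i j] by simp

lemma mm_sum: "(\<Sum>l\<in>UNIV. (A ** B) $ i $ l * x l) = (\<Sum>k\<in>UNIV. A $ i $ k * (\<Sum>l\<in>UNIV. B $ k $ l * x l))"
  for A B :: "real^'n^'n"
  by (simp add: mmult_entry sum_distrib_left sum_distrib_right mult.assoc) (rule sum.swap)

lemma delta_sum_r: "(\<Sum>j\<in>UNIV. x j * (if i = j then 1 else 0)) = (x i :: real)" for x :: "'n::finite \<Rightarrow> real"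
proof -
  have "(\<Sum>j\<in>UNIV. x j * (if i = j then 1 else 0)) = (\<Sum>j\<in>UNIV. if i = j then x j else 0)"
    by (rule sum.cong) auto
  then show ?thesis by (simp add: sum.delta')
qed

lemma delta_sum_l: "(\<Sum>j\<in>UNIV. (if i = j then 1 else 0) * x j) = (x i :: real)" for x :: "'n::finite \<Rightarrow> real"
  using delta_sum_r[of x i] by (simp add: mult.commute)

lemma T2_A:
  fixes M :: "real^'n^'n" and phi phi' :: "'n \<Rightarrow> real \<Rightarrow> real"
  assumes d: "\<And>k t. 0 \<le> t \<Longrightarrow> (phi k has_real_derivative phi' k t) (at t within {0..})"
  shows "T2 (\<lambda>e. integral {0..e} (\<lambda>t. \<Sum>j\<in>UNIV. trans_mat M t $ i $ j * phi j t)) 0 (phi i 0)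
           (((\<Sum>j\<in>UNIV. M $ i $ j * phi j 0) + phi' i 0) / 2)"
proof -
  have c: "continuous_on {0..} (\<lambda>t. \<Sum>j\<in>UNIV. trans_mat M t $ i $ j * phi j t)"
    by (intro continuous_on_sum continuous_on_mult trans_cont0 cont_of_deriv[OF d])
  have "((\<lambda>t. trans_mat M t $ i $ j * phi j t) has_real_derivative
           (M ** trans_mat M 0) $ i $ j * phi j 0 + phi' j 0 * trans_mat M 0 $ i $ j) (at 0 within {0..})" for j
  proof (rule DERIV_mult)
    show "((\<lambda>t. trans_mat M t $ i $ j) has_real_derivative (M ** trans_mat M 0) $ i $ j) (at 0 within {0..})"
      by (rule has_field_derivative_at_within[OF trans_deriv])
    show "(phi j has_real_derivative phi' j 0) (at 0 within {0..})" by (rule d) simp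
  qed
  then have dd: "((\<lambda>t. \<Sum>j\<in>UNIV. trans_mat M t $ i $ j * phi j t) has_real_derivative
       (\<Sum>j\<in>UNIV. (M ** trans_mat M 0) $ i $ j * phi j 0 + phi' j 0 * trans_mat M 0 $ i $ j)) (at 0 within {0..})"
    by (rule DERIV_sum[of UNIV "\<lambda>t j. trans_mat M t $ i $ j * phi j t"])
  show ?thesis
    by (rule T2_coeffs[OF T2_integral[OF c dd]])
       (simp_all add: trans_zero mat_entry sum.distrib delta_sum_r delta_sum_l)
qed

theorem mainTheorem3:
  fixes D :: "'n::finite \<Rightarrow> (real^'n) set"
    and f ft :: "real \<Rightarrow> 'n \<Rightarrow> real^'n \<Rightarrow> real"
    and i :: 'n and Q Qs :: "real^'n^'n"
  assumes D_sub: "\<And>j. D j \<subseteq> E_set j"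
    and I_f: "cond_I D f"
    and deriv: "\<And>t j q. t \<ge> 0 \<Longrightarrow> q \<in> D j \<Longrightarrow>
                  ((\<lambda>s. f s j q) has_real_derivative ft t j q) (at t within {0..})"
    and cont: "\<And>j q. q \<in> D j \<Longrightarrow> continuous_on {0..} (\<lambda>t. ft t j q)"
    and I_ft: "cond_I D ft"
    and R: "cond_R D f ft"
    and Q: "admissible D Q" and Qs: "admissible D Qs"
  shows "(\<lambda>e. payoff f i Qs - payoff_switch f i Q e Qs
            - ((Gamma_i f Qs i (Qs $ i) - Gamma_i f Qs i (Q $ i)) * e
               + (1/2) * (Lambda f ft Qs i Qs - Lambda f ft Qs i Q) * e\<^sup>2))
         \<in> o[at_right 0](\<lambda>e. e\<^sup>2)"
proof -
  have rowQ: "Q $ j \<in> D j" for j using Q unfolding admissible_def by blast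
  have rowQs: "Qs $ j \<in> D j" for j using Qs unfolding admissible_def by blast
  have genI: "gen M" if "\<And>j. M $ j \<in> D j" for M :: "real^'n^'n"
    unfolding gen_def
  proof (intro conjI allI impI)
    fix a b :: 'n assume "a \<noteq> b"
    then show "0 \<le> M $ a $ b" using E_set_nonneg[of "M $ a" a b] that D_sub by blast
  next
    fix a :: 'n show "(\<Sum>j\<in>UNIV. M $ a $ j) = 0" using E_set_sum[of "M $ a" a] that D_sub by blast
  qed
  have gQ: "gen Q" by (rule genI[OF rowQ])
  have gQs: "gen Qs" by (rule genI[OF rowQs])
  define psi where "psi = (\<lambda>k t. f t k (Qs $ k))"
  define psi' where "psi' = (\<lambda>k t. ft t k (Qs $ k))"
  define phi where "phi = (\<lambda>k t. f t k (Q $ k))"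
  define phi' where "phi' = (\<lambda>k t. ft t k (Q $ k))"
  have dpsi: "\<And>k t. 0 \<le> t \<Longrightarrow> (psi k has_real_derivative psi' k t) (at t within {0..})"
    unfolding psi_def psi'_def using deriv rowQs by blast
  have dphi: "\<And>k t. 0 \<le> t \<Longrightarrow> (phi k has_real_derivative phi' k t) (at t within {0..})"
    unfolding phi_def phi'_def using deriv rowQ by blast
  have cpsi: "continuous_on {0..} (psi k)" for k by (rule cont_of_deriv[OF dpsi])
  have cpsi': "continuous_on {0..} (psi' k)" for k unfolding psi'_def by (rule cont[OF rowQs])
  have Ipsi: "set_integrable lborel {0..} (psi k)" for k
    using condI_LI[OF I_f rowQs[of k]] cpsi[of k] unfolding psi_def by blast
  have Ipsi': "set_integrable lborel {0..} (psi' k)" for k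
    using condI_LI[OF I_ft rowQs[of k]] cpsi'[of k] unfolding psi'_def by blast
  define F where "F = (\<lambda>k. payoff f k Qs)"
  define G where "G = (\<lambda>k. payoff ft k Qs)"
  have F_eq: "F k = integral {0..} (\<lambda>t. \<Sum>j\<in>UNIV. trans_mat Qs t $ k $ j * psi j t)" for k
    by (simp add: F_def payoff_def psi_def)
  have G_eq: "G k = integral {0..} (\<lambda>t. \<Sum>j\<in>UNIV. trans_mat Qs t $ k $ j * psi' j t)" for k
    by (simp add: G_def payoff_def psi'_def)
  have Gid: "G j = - psi j 0 - (\<Sum>l\<in>UNIV. Qs $ j $ l * F l)" for j
    unfolding G_eq F_eq by (rule ibp[OF gQs dpsi cpsi' Ipsi Ipsi'])
  define A where "A = (\<lambda>e. integral {0..e} (\<lambda>t. \<Sum>j\<in>UNIV. trans_mat Q t $ i $ j * phi j t))"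
  define B where "B = (\<lambda>m e. integral {0..e} (\<lambda>t. \<Sum>k\<in>UNIV. trans_mat Qs t $ m $ k * psi k t))"
  define H where "H = (\<lambda>l e. integral {e..} (\<lambda>t. \<Sum>k\<in>UNIV. trans_mat Qs (t - e) $ l $ k * psi k t))"
  have sw: "payoff_switch f i Q e Qs = A e + (\<Sum>l\<in>UNIV. trans_mat Q e $ i $ l * H l e)" if e: "0 \<le> e" for e
  proof -
    have td: "integral {e..} (\<lambda>t. \<Sum>j\<in>UNIV. (trans_mat Q e ** trans_mat Qs (t - e)) $ i $ j * psi j t)
        = (\<Sum>l\<in>UNIV. trans_mat Q e $ i $ l * H l e)"
      using tail_decomp[OF gQs e Ipsi cpsi] by (simp add: H_def)
    show ?thesis
      unfolding payoff_switch_def A_def phi_def td[unfolded psi_def, symmetric] by simp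
  qed
  have split: "F j = B j e + (\<Sum>l\<in>UNIV. trans_mat Qs e $ j $ l * H l e)" if e: "0 \<le> e" for j e
  proof -
    define u where "u = (\<lambda>t. \<Sum>k\<in>UNIV. trans_mat Qs t $ j $ k * psi k t)"
    have Iu: "set_integrable lborel {0..} u"
      unfolding u_def by (rule LI_sum, rule LI_Rpsi0[OF gQs Ipsi cpsi])
    have h1: "(u has_integral integral {0..e} u) {0..e}"
      by (rule integrable_integral, rule LI_HK(1)[OF set_integrable_subset[OF Iu]]) auto
    have h2: "(u has_integral integral {e..} u) {e..}"
      by (rule integrable_integral, rule LI_HK(1)[OF set_integrable_subset[OF Iu]]) (use e in auto)
    have un: "{0..e} \<union> {e..} = {0::real..}" using e by auto
    have "(u has_integral (integral {0..e} u + integral {e..} u)) {0..}"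
    proof -
      have "{0..e} \<inter> {e..} = {e}" using e by auto
      then have "negligible ({0..e} \<inter> {e..})" by simp
      from has_integral_Un[OF h1 h2 this] show ?thesis using un by simp
    qed
    then have "F j = integral {0..e} u + integral {e..} u"
      unfolding F_eq u_def[symmetric] by (rule integral_unique)
    also have "integral {e..} u = integral {e..} (\<lambda>t. \<Sum>k\<in>UNIV. (trans_mat Qs e ** trans_mat Qs (t - e)) $ j $ k * psi k t)"
    proof (rule integral_cong)
      fix t show "u t = (\<Sum>k\<in>UNIV. (trans_mat Qs e ** trans_mat Qs (t - e)) $ j $ k * psi k t)"
        using trans_add_time[of Qs e "t - e"] by (simp add: u_def)
    qed
    also have "\<dots> = (\<Sum>l\<in>UNIV. trans_mat Qs e $ j $ l * H l e)"
      using tail_decomp[OF gQs e Ipsi cpsi] by (simp add: H_def)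
    finally show ?thesis by (simp add: B_def u_def)
  qed
  have Hid: "H l e = (\<Sum>m\<in>UNIV. trans_mat Qs (- e) $ l $ m * (F m - B m e))" if e: "0 \<le> e" for l e
  proof -
    have "(\<Sum>m\<in>UNIV. trans_mat Qs (- e) $ l $ m * (F m - B m e))
        = (\<Sum>m\<in>UNIV. trans_mat Qs (- e) $ l $ m * (\<Sum>n\<in>UNIV. trans_mat Qs e $ m $ n * H n e))"
      using split[OF e] by simp
    also have "\<dots> = (\<Sum>n\<in>UNIV. (trans_mat Qs (- e) ** trans_mat Qs e) $ l $ n * H n e)"
      by (rule mm_sum[symmetric])
    also have "trans_mat Qs (- e) ** trans_mat Qs e = mat 1"
      using trans_add_time[of Qs "- e" e] by (simp add: trans_zero)
    finally show ?thesis by (simp add: mat_entry delta_sum_l)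
  qed
  have Delta: "payoff f i Qs - payoff_switch f i Q e Qs
      = F i - A e - (\<Sum>l\<in>UNIV. trans_mat Q e $ i $ l * (\<Sum>m\<in>UNIV. trans_mat Qs (- e) $ l $ m * (F m - B m e)))"
    if e: "0 \<le> e" for e
    using sw[OF e] Hid[OF e] by (simp add: F_def)
  have TA: "T2 A 0 (phi i 0) (((\<Sum>j\<in>UNIV. Q $ i $ j * phi j 0) + phi' i 0) / 2)"
    unfolding A_def by (rule T2_A[OF dphi])
  have TB: "T2 (B m) 0 (psi m 0) (((\<Sum>k\<in>UNIV. Qs $ m $ k * psi k 0) + psi' m 0) / 2)" for m
    unfolding B_def by (rule T2_A[OF dpsi])
  define bl where "bl = (\<lambda>l. - psi l 0 - (\<Sum>m\<in>UNIV. Qs $ l $ m * F m))"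
  define cl where "cl = (\<lambda>l. - (((\<Sum>k\<in>UNIV. Qs $ l $ k * psi k 0) + psi' l 0) / 2)
       + (\<Sum>m\<in>UNIV. Qs $ l $ m * psi m 0) + (\<Sum>m\<in>UNIV. (Qs ** Qs) $ l $ m * F m) / 2)"
  have Tin: "T2 (\<lambda>e. \<Sum>m\<in>UNIV. trans_mat Qs (- e) $ l $ m * (F m - B m e)) (F l) (bl l) (cl l)" for l
    apply (rule T2_coeffs)
       apply (rule T2_sum[OF finite_class.finite_UNIV])
       apply (rule T2_mult[OF T2_trans_neg T2_diff[OF T2_const TB]])
      apply (simp_all add: bl_def cl_def delta_sum_l delta_sum_r sum.distrib sum_subtractf sum_negf sum_divide_distrib[symmetric] algebra_simps)
    done
  have Tout: "T2 (\<lambda>e. \<Sum>l\<in>UNIV. trans_mat Q e $ i $ l * (\<Sum>m\<in>UNIV. trans_mat Qs (- e) $ l $ m * (F m - B m e)))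
      (F i) (bl i + (\<Sum>l\<in>UNIV. Q $ i $ l * F l))
      (cl i + (\<Sum>l\<in>UNIV. Q $ i $ l * bl l) + (\<Sum>l\<in>UNIV. (Q ** Q) $ i $ l * F l) / 2)"
    apply (rule T2_coeffs)
       apply (rule T2_sum[OF finite_class.finite_UNIV])
       apply (rule T2_mult[OF T2_trans Tin])
      apply (simp_all add: delta_sum_l delta_sum_r sum.distrib sum_divide_distrib[symmetric] algebra_simps)
    done
  have TD: "T2 (\<lambda>e. F i - A e - (\<Sum>l\<in>UNIV. trans_mat Q e $ i $ l * (\<Sum>m\<in>UNIV. trans_mat Qs (- e) $ l $ m * (F m - B m e))))
      (F i - 0 - F i) (0 - phi i 0 - (bl i + (\<Sum>l\<in>UNIV. Q $ i $ l * F l)))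
      (0 - ((\<Sum>j\<in>UNIV. Q $ i $ j * phi j 0) + phi' i 0) / 2
         - (cl i + (\<Sum>l\<in>UNIV. Q $ i $ l * bl l) + (\<Sum>l\<in>UNIV. (Q ** Q) $ i $ l * F l) / 2))"
    by (rule T2_diff[OF T2_diff[OF T2_const TA] Tout])
  have ev: "eventually (\<lambda>e. payoff f i Qs - payoff_switch f i Q e Qs
      = F i - A e - (\<Sum>l\<in>UNIV. trans_mat Q e $ i $ l * (\<Sum>m\<in>UNIV. trans_mat Qs (- e) $ l $ m * (F m - B m e)))) (at_right 0)"
    by (rule ev_right[of 1]) (auto intro: Delta)
  note TD' = T2_cong[OF ev TD]
  have X: "0 - phi i 0 - (bl i + (\<Sum>l\<in>UNIV. Q $ i $ l * F l))
      = Gamma_i f Qs i (Qs $ i) - Gamma_i f Qs i (Q $ i)"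
    by (simp add: bl_def Gamma_i_def inner_vec_def payoff_vec_def F_def phi_def psi_def)
  have L1: "Lambda f ft Qs i Qs = psi' i 0 + 2 * (\<Sum>k\<in>UNIV. Qs $ i $ k * G k) + (\<Sum>k\<in>UNIV. Qs $ i $ k * psi k 0)
      + (\<Sum>k\<in>UNIV. Qs $ i $ k * (\<Sum>l\<in>UNIV. Qs $ k $ l * F l))"
    by (simp add: Lambda_def Gamma_vec_def Gamma_i_def inner_vec_def payoff_vec_def psi_def psi'_def F_def G_def
        sum.distrib sum_distrib_left ring_distribs mult.left_commute)
  have L2: "Lambda f ft Qs i Q = phi' i 0 + 2 * (\<Sum>k\<in>UNIV. Q $ i $ k * G k) + (\<Sum>k\<in>UNIV. Q $ i $ k * phi k 0)
      + (\<Sum>k\<in>UNIV. Q $ i $ k * (\<Sum>l\<in>UNIV. Q $ k $ l * F l))"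
    by (simp add: Lambda_def Gamma_vec_def Gamma_i_def inner_vec_def payoff_vec_def phi_def phi'_def F_def G_def
        sum.distrib sum_distrib_left ring_distribs mult.left_commute)
  have e1: "(\<Sum>k\<in>UNIV. Qs $ i $ k * G k) = - (\<Sum>k\<in>UNIV. Qs $ i $ k * psi k 0) - (\<Sum>k\<in>UNIV. Qs $ i $ k * (\<Sum>l\<in>UNIV. Qs $ k $ l * F l))"
    by (simp add: Gid ring_distribs sum.distrib sum_subtractf sum_negf)
  have e2: "(\<Sum>k\<in>UNIV. Q $ i $ k * G k) = - (\<Sum>k\<in>UNIV. Q $ i $ k * psi k 0) - (\<Sum>k\<in>UNIV. Q $ i $ k * (\<Sum>l\<in>UNIV. Qs $ k $ l * F l))"
    by (simp add: Gid ring_distribs sum.distrib sum_subtractf sum_negf)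
  have e3: "(\<Sum>l\<in>UNIV. Q $ i $ l * bl l) = - (\<Sum>k\<in>UNIV. Q $ i $ k * psi k 0) - (\<Sum>k\<in>UNIV. Q $ i $ k * (\<Sum>l\<in>UNIV. Qs $ k $ l * F l))"
    by (simp add: bl_def ring_distribs sum.distrib sum_subtractf sum_negf)
  have e4: "(\<Sum>l\<in>UNIV. (Q ** Q) $ i $ l * F l) = (\<Sum>k\<in>UNIV. Q $ i $ k * (\<Sum>l\<in>UNIV. Q $ k $ l * F l))"
    by (rule mm_sum)
  have e5: "(\<Sum>l\<in>UNIV. (Qs ** Qs) $ i $ l * F l) = (\<Sum>k\<in>UNIV. Qs $ i $ k * (\<Sum>l\<in>UNIV. Qs $ k $ l * F l))"
    by (rule mm_sum)
  have Y: "0 - ((\<Sum>j\<in>UNIV. Q $ i $ j * phi j 0) + phi' i 0) / 2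
         - (cl i + (\<Sum>l\<in>UNIV. Q $ i $ l * bl l) + (\<Sum>l\<in>UNIV. (Q ** Q) $ i $ l * F l) / 2)
      = (1/2) * (Lambda f ft Qs i Qs - Lambda f ft Qs i Q)"
    unfolding L1 L2 cl_def e1 e2 e3 e4 e5 by (simp add: field_simps)
  have fin: "T2 (\<lambda>e. payoff f i Qs - payoff_switch f i Q e Qs) 0
      (Gamma_i f Qs i (Qs $ i) - Gamma_i f Qs i (Q $ i)) ((1/2) * (Lambda f ft Qs i Qs - Lambda f ft Qs i Q))"
    by (rule T2_coeffs[OF TD' _ X Y]) simp
  then show ?thesis unfolding T2_def by simp
qed

end
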